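(* Let $\mathscr{H}$ be a complex Hilbert space and let $A,B\in\mathbb{B}(\mathscr{H})$ satisfy $|A|B=B^*|A|$. Then $$w(AB)\leq\frac{1}{\sqrt{2}}\, r(B)\, w\left(|A|+i|A^*|\right).$$
   Context: For $T\in\mathbb{B}(\mathscr{H})$, $|T|=(T^*T)^{1/2}$, $w(T)=\sup\{|\langle Tx,x\rangle|: \|x\|=1\}$ is the numerical radius and $r(T)$ is the spectral radius. *)

theory Defs
  imports "HOL-Analysis.Analysis"
begin

class complex_hilbert_space = banach +
  fixes scaleC :: "complex \<Rightarrow> 'a \<Rightarrow> 'a"
    and cinner :: "'a \<Rightarrow> 'a \<Rightarrow> complex"
  assumes scaleR_scaleC: "scaleR r x = scaleC (complex_of_real r) x"
    and scaleC_add_right: "scaleC a (x + y) = scaleC a x + scaleC a y"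
    and scaleC_add_left: "scaleC (a + b) x = scaleC a x + scaleC b x"
    and scaleC_scaleC: "scaleC a (scaleC b x) = scaleC (a * b) x"
    and scaleC_one: "scaleC 1 x = x"
    and cinner_add_left: "cinner (x + y) z = cinner x z + cinner y z"
    and cinner_scaleC_left: "cinner (scaleC a x) y = a * cinner x y"
    and cinner_commute: "cinner x y = cnj (cinner y x)"
    and norm_eq_sqrt_cinner: "norm x = sqrt (Re (cinner x x))"

definition bounded_clinear :: "('a::complex_hilbert_space \<Rightarrow> 'a) \<Rightarrow> bool" where
  "bounded_clinear T \<longleftrightarrow> bounded_linear T \<and> (\<forall>c x. T (scaleC c x) = scaleC c (T x))"

definition adj :: "('a::complex_hilbert_space \<Rightarrow> 'a) \<Rightarrow> ('a \<Rightarrow> 'a)" where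
  "adj T = (SOME S. \<forall>x y. cinner (T x) y = cinner x (S y))"

definition pos_op :: "('a::complex_hilbert_space \<Rightarrow> 'a) \<Rightarrow> bool" where
  "pos_op T \<longleftrightarrow> bounded_clinear T \<and> (\<forall>x. cinner (T x) x \<in> \<real> \<and> 0 \<le> Re (cinner (T x) x))"

definition sqrt_op :: "('a::complex_hilbert_space \<Rightarrow> 'a) \<Rightarrow> ('a \<Rightarrow> 'a)" where
  "sqrt_op P = (THE R. pos_op R \<and> R \<circ> R = P)"

definition abs_op :: "('a::complex_hilbert_space \<Rightarrow> 'a) \<Rightarrow> ('a \<Rightarrow> 'a)" where
  "abs_op T = sqrt_op (adj T \<circ> T)"

text \<open>Numerical radius (with the convention that it is 0 on the zero space).\<close>
definition numrad :: "('a::complex_hilbert_space \<Rightarrow> 'a) \<Rightarrow> real" where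
  "numrad T = Sup (insert 0 {cmod (cinner (T x) x) | x. norm x = 1})"

definition spectrum_op :: "('a::complex_hilbert_space \<Rightarrow> 'a) \<Rightarrow> complex set" where
  "spectrum_op T = {z. \<not> (\<exists>S. bounded_clinear S \<and>
      S \<circ> (\<lambda>x. T x - scaleC z x) = id \<and> (\<lambda>x. T x - scaleC z x) \<circ> S = id)}"

definition specrad :: "('a::complex_hilbert_space \<Rightarrow> 'a) \<Rightarrow> real" where
  "specrad T = Sup (insert 0 (cmod ` spectrum_op T))"

end

theory Submission
  imports Defs "HOL-Computational_Algebra.Formal_Power_Series"
begin


lemma scaleC_zero_left [simp]: "scaleC 0 x = 0"
proof -
  have "scaleC 0 x = scaleC (0+0) x" by simp
  also have "\<dots> = scaleC 0 x + scaleC 0 x" by (rule scaleC_add_left)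
  finally show ?thesis by simp
qed

lemma scaleC_zero_right [simp]: "scaleC a 0 = 0"
proof -
  have "scaleC a 0 = scaleC a (0+0)" by simp
  also have "\<dots> = scaleC a 0 + scaleC a 0" by (rule scaleC_add_right)
  finally show ?thesis by simp
qed

lemma scaleC_minus_left: "scaleC (- a) x = - scaleC a x"
proof -
  have "scaleC (- a) x + scaleC a x = 0" by (simp add: scaleC_add_left[symmetric])
  then show ?thesis by (simp add: eq_neg_iff_add_eq_0)
qed

lemma scaleC_minus_right: "scaleC a (- x) = - scaleC a x"
proof -
  have "scaleC a (- x) + scaleC a x = 0" by (simp add: scaleC_add_right[symmetric])
  then show ?thesis by (simp add: eq_neg_iff_add_eq_0)
qed

lemma scaleC_diff_left: "scaleC (a - b) x = scaleC a x - scaleC b x"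
  using scaleC_add_left[of a "-b" x] by (simp add: scaleC_minus_left)

lemma scaleC_diff_right: "scaleC a (x - y) = scaleC a x - scaleC a y"
  using scaleC_add_right[of a x "-y"] by (simp add: scaleC_minus_right)

lemma scaleC_sum_right: "scaleC a (sum f A) = sum (\<lambda>i. scaleC a (f i)) A"
  by (induction A rule: infinite_finite_induct) (auto simp: scaleC_add_right)

lemma scaleC_of_real: "scaleC (complex_of_real r) x = scaleR r x"
  by (simp add: scaleR_scaleC)

lemma cinner_zero_left [simp]: "cinner 0 y = 0"
  using cinner_add_left[of 0 0 y] by simp

lemma cinner_zero_right [simp]: "cinner x 0 = 0"
  using cinner_commute[of x 0] by simp

lemma cinner_add_right: "cinner x (y + z) = cinner x y + cinner x z"
proof -
  have "cinner x (y + z) = cnj (cinner (y + z) x)" by (rule cinner_commute)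
  also have "\<dots> = cnj (cinner y x) + cnj (cinner z x)" by (subst cinner_add_left) (rule complex_cnj_add)
  also have "\<dots> = cinner x y + cinner x z" by (simp only: cinner_commute[of x y] cinner_commute[of x z] complex_cnj_cnj)
  finally show ?thesis .
qed

lemma cinner_scaleC_right: "cinner x (scaleC a y) = cnj a * cinner x y"
proof -
  have "cinner x (scaleC a y) = cnj (cinner (scaleC a y) x)" by (rule cinner_commute)
  also have "\<dots> = cnj a * cnj (cinner y x)" by (subst cinner_scaleC_left) (rule complex_cnj_mult)
  also have "\<dots> = cnj a * cinner x y" by (metis cinner_commute)
  finally show ?thesis .
qed

lemma cinner_scaleR_left: "cinner (scaleR r x) y = complex_of_real r * cinner x y"
  by (simp add: scaleR_scaleC cinner_scaleC_left)

lemma cinner_scaleR_right: "cinner x (scaleR r y) = complex_of_real r * cinner x y"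
  by (simp add: scaleR_scaleC cinner_scaleC_right)

lemma cinner_minus_left: "cinner (- x) y = - cinner x y"
  using cinner_scaleR_left[of "-1" x y] by simp

lemma cinner_minus_right: "cinner x (- y) = - cinner x y"
  using cinner_scaleR_right[of x "-1" y] by simp

lemma cinner_diff_left: "cinner (x - y) z = cinner x z - cinner y z"
  using cinner_add_left[of x "-y" z] by (simp add: cinner_minus_left)

lemma cinner_diff_right: "cinner x (y - z) = cinner x y - cinner x z"
  using cinner_add_right[of x y "-z"] by (simp add: cinner_minus_right)

lemma cinner_sum_left: "cinner (sum f A) y = (\<Sum>i\<in>A. cinner (f i) y)"
  by (induction A rule: infinite_finite_induct) (auto simp: cinner_add_left)

lemma cinner_sum_right: "cinner y (sum f A) = (\<Sum>i\<in>A. cinner y (f i))"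
  by (induction A rule: infinite_finite_induct) (auto simp: cinner_add_right)

lemma cinner_self_Im: "Im (cinner x x) = 0"
proof -
  have "Im (cinner x x) = Im (cnj (cinner x x))" by (metis cinner_commute)
  then show ?thesis by simp
qed

lemma cinner_self_Re_nonneg: "0 \<le> Re (cinner x x)"
proof (rule ccontr)
  assume "\<not> 0 \<le> Re (cinner x x)"
  then have "sqrt (Re (cinner x x)) < 0" by simp
  then show False using norm_eq_sqrt_cinner[of x] norm_ge_zero[of x] by linarith
qed

lemma cinner_self_Re: "Re (cinner x x) = norm x ^ 2"
  using norm_eq_sqrt_cinner[of x] cinner_self_Re_nonneg[of x] by simp

lemma cinner_self: "cinner x x = complex_of_real (norm x ^ 2)"
  using cinner_self_Re[of x] cinner_self_Im[of x] by (simp add: complex_eq_iff)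

lemma cinner_self_eq_0 [simp]: "cinner x x = 0 \<longleftrightarrow> x = 0"
  by (simp add: cinner_self)

lemma norm_scaleC: "norm (scaleC a x) = cmod a * norm x"
proof -
  have "cinner (scaleC a x) (scaleC a x) = (a * cnj a) * cinner x x"
    by (simp add: cinner_scaleC_left cinner_scaleC_right)
  also have "a * cnj a = complex_of_real (cmod a ^ 2)" by (rule complex_norm_square[symmetric])
  finally have "complex_of_real (norm (scaleC a x) ^ 2) = complex_of_real (cmod a ^ 2 * norm x ^ 2)"
    by (simp only: cinner_self of_real_mult)
  then have "norm (scaleC a x) ^ 2 = cmod a ^ 2 * norm x ^ 2"
    by (simp only: of_real_eq_iff)
  then have "norm (scaleC a x) ^ 2 = (cmod a * norm x) ^ 2" by (simp add: power_mult_distrib)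
  then show ?thesis by (simp add: power2_eq_iff_nonneg)
qed

lemma scaleC_eq_0_iff: "scaleC a x = 0 \<longleftrightarrow> a = 0 \<or> x = 0"
  using norm_scaleC[of a x] by (metis mult_eq_0_iff norm_eq_zero norm_zero scaleC_zero_left scaleC_zero_right zero_complex.simps(1) complex_mod_cnj)

lemma cinner_ext_left: "(\<And>z. cinner x z = cinner y z) \<Longrightarrow> x = y"
  by (metis cinner_diff_left cinner_self_eq_0 eq_iff_diff_eq_0)

lemma norm_add_sq: "norm (x + y) ^ 2 = norm x ^ 2 + norm y ^ 2 + 2 * Re (cinner x y)"
proof -
  have "Re (cinner y x) = Re (cnj (cinner x y))" by (metis cinner_commute)
  then have 1: "Re (cinner y x) = Re (cinner x y)" by simp
  have "Re (cinner (x+y) (x+y)) = Re (cinner x x) + Re (cinner y y) + Re (cinner x y) + Re (cinner y x)"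
    by (simp add: cinner_add_left cinner_add_right)
  then show ?thesis using 1 by (simp only: cinner_self_Re)
qed

lemma norm_diff_sq: "norm (x - y) ^ 2 = norm x ^ 2 + norm y ^ 2 - 2 * Re (cinner x y)"
  using norm_add_sq[of x "-y"] by (simp add: cinner_minus_right)

lemma parallelogram: "norm (x + y) ^ 2 + norm (x - y) ^ 2 = 2 * norm x ^ 2 + 2 * norm y ^ 2"
  for x y :: "'a::complex_hilbert_space"
  using norm_add_sq[of x y] norm_diff_sq[of x y] by simp



section \<open>Linear operators, Cauchy-Schwarz\<close>

definition lin :: "('a::complex_hilbert_space \<Rightarrow> 'a) \<Rightarrow> bool" where
  "lin T \<longleftrightarrow> (\<forall>x y. T (x + y) = T x + T y) \<and> (\<forall>c x. T (scaleC c x) = scaleC c (T x))"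

definition selfadj :: "('a::complex_hilbert_space \<Rightarrow> 'a) \<Rightarrow> bool" where
  "selfadj T \<longleftrightarrow> (\<forall>x y. cinner (T x) y = cinner x (T y))"

lemma linD_add: "lin T \<Longrightarrow> T (x + y) = T x + T y"
  by (simp add: lin_def)

lemma linD_scaleC: "lin T \<Longrightarrow> T (scaleC c x) = scaleC c (T x)"
  by (simp add: lin_def)

lemma lin_zero: "lin T \<Longrightarrow> T 0 = 0"
  using linD_add[of T 0 0] by simp

lemma lin_minus: "lin T \<Longrightarrow> T (- x) = - T x"
  using linD_add[of T x "-x"] lin_zero[of T] by (simp add: eq_neg_iff_add_eq_0) (metis add.commute eq_neg_iff_add_eq_0)

lemma lin_diff: "lin T \<Longrightarrow> T (x - y) = T x - T y"
  using linD_add[of T x "-y"] lin_minus[of T y] by simp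

lemma lin_scaleR: "lin T \<Longrightarrow> T (scaleR r x) = scaleR r (T x)"
  by (simp add: scaleR_scaleC linD_scaleC)

lemma lin_sum: "lin T \<Longrightarrow> T (sum f A) = (\<Sum>i\<in>A. T (f i))"
  by (induction A rule: infinite_finite_induct) (auto simp: lin_zero linD_add)

lemma lin_linear: "lin T \<Longrightarrow> linear T"
  by (simp add: linear_iff linD_add lin_scaleR)

lemma bounded_clinear_lin: "bounded_clinear T \<Longrightarrow> lin T"
  unfolding bounded_clinear_def lin_def using linear_add bounded_linear.linear by blast

lemma bounded_clinear_bl: "bounded_clinear T \<Longrightarrow> bounded_linear T"
  by (simp add: bounded_clinear_def)

lemma bounded_clinearI: "lin T \<Longrightarrow> (\<And>x. norm (T x) \<le> K * norm x) \<Longrightarrow> bounded_clinear T"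
  unfolding bounded_clinear_def
  by (auto simp: linD_scaleC mult.commute intro!: bounded_linear_intro[where K=K] linD_add lin_scaleR)

lemma lin_id: "lin (\<lambda>x. x)"
  by (simp add: lin_def)

lemma lin_id': "lin id"
  by (simp add: lin_def)

lemma lin_comp: "lin S \<Longrightarrow> lin T \<Longrightarrow> lin (S \<circ> T)"
  by (simp add: lin_def)

lemma lin_comp': "lin S \<Longrightarrow> lin T \<Longrightarrow> lin (\<lambda>x. S (T x))"
  by (simp add: lin_def)

lemma bounded_clinear_id: "bounded_clinear (\<lambda>x. x)"
  by (rule bounded_clinearI[where K=1]) (simp_all add: lin_id)

lemma bounded_clinear_comp: "bounded_clinear S \<Longrightarrow> bounded_clinear T \<Longrightarrow> bounded_clinear (S \<circ> T)"
  unfolding bounded_clinear_def using bounded_linear_compose[of S T]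
  by (simp add: o_def)

lemma bounded_clinear_comp': "bounded_clinear S \<Longrightarrow> bounded_clinear T \<Longrightarrow> bounded_clinear (\<lambda>x. S (T x))"
  using bounded_clinear_comp[of S T] by (simp add: o_def)

lemma bounded_clinear_add: "bounded_clinear S \<Longrightarrow> bounded_clinear T \<Longrightarrow> bounded_clinear (\<lambda>x. S x + T x)"
  unfolding bounded_clinear_def using bounded_linear_add[of S T]
  by (simp add: scaleC_add_right)

lemma bounded_clinear_diff: "bounded_clinear S \<Longrightarrow> bounded_clinear T \<Longrightarrow> bounded_clinear (\<lambda>x. S x - T x)"
  unfolding bounded_clinear_def using bounded_linear_sub[of S T]
  by (simp add: scaleC_diff_right)

lemma bounded_clinear_scaleC: "bounded_clinear T \<Longrightarrow> bounded_clinear (\<lambda>x. scaleC c (T x))"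
proof -
  assume T: "bounded_clinear T"
  then have l: "lin T" by (rule bounded_clinear_lin)
  obtain K where K: "\<And>x. norm (T x) \<le> norm x * K"
    using T unfolding bounded_clinear_def by (metis bounded_linear.bounded)
  show ?thesis
  proof (rule bounded_clinearI[where K="cmod c * K"])
    show "lin (\<lambda>x. scaleC c (T x))" using l
      by (simp add: lin_def scaleC_add_right scaleC_scaleC mult.commute)
    fix x show "norm (scaleC c (T x)) \<le> cmod c * K * norm x"
      using K[of x] by (simp add: norm_scaleC) (metis mult.commute mult.left_commute mult_left_mono norm_ge_zero)
  qed
qed

lemma bounded_clinear_scaleR: "bounded_clinear T \<Longrightarrow> bounded_clinear (\<lambda>x. scaleR r (T x))"
  using bounded_clinear_scaleC[of T "complex_of_real r"] by (simp add: scaleR_scaleC)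

lemma bounded_clinear_onorm: "bounded_clinear T \<Longrightarrow> norm (T x) \<le> onorm T * norm x"
  by (simp add: bounded_clinear_def onorm)

lemma bounded_clinear_onorm_nonneg: "bounded_clinear T \<Longrightarrow> 0 \<le> onorm T"
  by (simp add: bounded_clinear_def onorm_pos_le)

lemma cnj_mult_self: "cnj c * c = complex_of_real (cmod c ^ 2)"
  using complex_norm_square[of c] by (simp add: mult.commute)

lemma lin_cinner_add: "lin P \<Longrightarrow> cinner (P (a + b)) (a + b) =
   cinner (P a) a + cinner (P a) b + cinner (P b) a + cinner (P b) b"
  by (simp add: linD_add cinner_add_left cinner_add_right)

lemma lin_cinner_diff: "lin P \<Longrightarrow> cinner (P (a - b)) (a - b) =
   cinner (P a) a - cinner (P a) b - cinner (P b) a + cinner (P b) b"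
  by (simp add: lin_diff cinner_diff_left cinner_diff_right)

lemma lin_cinner_scaleC: "lin P \<Longrightarrow> cinner (P (scaleC c a)) (scaleC c a) =
   complex_of_real (cmod c ^ 2) * cinner (P a) a"
  by (simp add: linD_scaleC cinner_scaleC_left cinner_scaleC_right mult.assoc[symmetric] cnj_mult_self)

lemma selfadj_swap: "selfadj S \<Longrightarrow> cinner (S b) a = cnj (cinner (S a) b)"
  unfolding selfadj_def by (metis cinner_commute)

lemma selfadj_real: "selfadj S \<Longrightarrow> Im (cinner (S a) a) = 0"
  using selfadj_swap[of S a a] by (metis Im_complex_div_lemma cnj.sel(2) complex_cnj_cancel_iff
      eq_neg_iff_add_eq_0 mult_zero_right neg_equal_zero)

lemma selfadj_real': "selfadj S \<Longrightarrow> cinner (S a) a = complex_of_real (Re (cinner (S a) a))"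
  using selfadj_real[of S a] by (simp add: complex_eq_iff)

lemma amgm_inf:
  fixes X a b c :: real
  assumes "0 \<le> a" "0 \<le> b" "0 \<le> c" and H: "\<And>s. s > 0 \<Longrightarrow> X \<le> c * (s * a + b / s)"
  shows "X \<le> 2 * c * sqrt (a * b)"
proof (cases "a > 0 \<and> b > 0")
  case True
  define s where "s = sqrt (b / a)"
  have s: "s > 0" using True by (simp add: s_def)
  have "s * a = sqrt (a * b)" using True
    by (simp add: s_def real_sqrt_divide field_simps real_sqrt_mult)
  moreover have "b / s = sqrt (a * b)" using True
    by (simp add: s_def real_sqrt_divide field_simps real_sqrt_mult)
  ultimately show ?thesis using H[OF s] by simp
next
  case False
  then have ab: "a * b = 0" using assms by auto
  show ?thesis
  proof (rule ccontr)
    assume "\<not> ?thesis"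
    then have X: "X > 0" using ab by simp
    show False
    proof (cases "a = 0")
      case True
      define s where "s = (c * b + 1) / X"
      have s: "s > 0" using X assms by (simp add: s_def add_nonneg_pos)
      have "c * (s * a + b / s) = c * b * X / (c * b + 1)" using True X assms by (simp add: s_def)
      also have "\<dots> < X" using X assms
        by (subst pos_divide_less_eq) (auto simp: algebra_simps add_pos_nonneg)
      finally show False using H[OF s] by simp
    next
      case False
      then have "b = 0" using ab by simp
      define s where "s = X / (c * a + 1)"
      have s: "s > 0" using X assms by (simp add: s_def add_nonneg_pos)
      have "c * (s * a + b / s) = c * a * X / (c * a + 1)" using \<open>b = 0\<close> X assms by (simp add: s_def)
      also have "\<dots> < X" using X assms
        by (subst pos_divide_less_eq) (auto simp: algebra_simps add_pos_nonneg)
      finally show False using H[OF s] by simp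
    qed
  qed
qed

lemma rotate_complex: "\<exists>\<theta>. cmod \<theta> = 1 \<and> \<theta> * z = complex_of_real (cmod z)"
proof (cases "z = 0")
  case True then show ?thesis by (intro exI[of _ 1]) simp
next
  case False
  show ?thesis
    by (intro exI[of _ "cnj z / complex_of_real (cmod z)"])
       (use False in \<open>simp add: norm_divide cnj_mult_self power2_eq_square\<close>)
qed

lemma herm_bound:
  assumes S: "lin S" "selfadj S" and P: "lin P" "selfadj P"
    and Ppos: "\<And>u. 0 \<le> Re (cinner (P u) u)" and r: "0 \<le> r"
    and H: "\<And>u. \<bar>Re (cinner (S u) u)\<bar> \<le> r * Re (cinner (P u) u)"
  shows "cmod (cinner (S u) v) \<le> r * sqrt (Re (cinner (P u) u) * Re (cinner (P v) v))"
proof -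
  obtain \<theta> where th: "cmod \<theta> = 1" "\<theta> * cinner (S u) v = complex_of_real (cmod (cinner (S u) v))"
    using rotate_complex by blast
  define p where "p = Re (cinner (P u) u)"
  define q where "q = Re (cinner (P v) v)"
  have key: "cmod (cinner (S u) v) \<le> (r / 2) * (s * p + q / s)" if s: "s > 0" for s
  proof -
    define t where "t = sqrt s"
    have t: "t > 0" "t * t = s" using s by (simp_all add: t_def)
    define a where "a = scaleC (\<theta> * complex_of_real t) u"
    define b where "b = scaleC (complex_of_real (1 / t)) v"
    have ab: "cinner (S a) b = \<theta> * cinner (S u) v"
      using t by (simp add: a_def b_def linD_scaleC[OF S(1)] cinner_scaleC_left cinner_scaleC_right)
    have ba: "cinner (S b) a = cnj (cinner (S a) b)" by (rule selfadj_swap[OF S(2)])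
    have "Re (cinner (S (a + b)) (a + b)) - Re (cinner (S (a - b)) (a - b)) =
          2 * Re (cinner (S a) b) + 2 * Re (cinner (S b) a)"
      by (simp add: lin_cinner_add[OF S(1)] lin_cinner_diff[OF S(1)])
    also have "\<dots> = 4 * cmod (cinner (S u) v)" using ab ba th by simp
    finally have 1: "4 * cmod (cinner (S u) v) =
        Re (cinner (S (a + b)) (a + b)) - Re (cinner (S (a - b)) (a - b))" by simp
    have "\<dots> \<le> r * Re (cinner (P (a + b)) (a + b)) + r * Re (cinner (P (a - b)) (a - b))"
      using H[of "a+b"] H[of "a-b"] by (simp add: abs_le_iff)
    also have "\<dots> = 2 * r * (Re (cinner (P a) a) + Re (cinner (P b) b))"
      by (simp add: lin_cinner_add[OF P(1)] lin_cinner_diff[OF P(1)] algebra_simps)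
    also have "Re (cinner (P a) a) = s * p"
      using t th by (simp add: a_def p_def lin_cinner_scaleC[OF P(1)] norm_mult power2_eq_square)
    also have "Re (cinner (P b) b) = q / s"
      using t by (simp add: b_def q_def lin_cinner_scaleC[OF P(1)] power2_eq_square norm_divide)
    finally show ?thesis using 1 by simp
  qed
  have "cmod (cinner (S u) v) \<le> 2 * (r / 2) * sqrt (p * q)"
    by (rule amgm_inf) (use key r Ppos in \<open>auto simp: p_def q_def\<close>)
  then show ?thesis by (simp add: p_def q_def)
qed

lemma cauchy_schwarz: "cmod (cinner x y) \<le> norm x * norm y"
proof -
  have "cmod (cinner ((\<lambda>x. x) x) y) \<le> 1 * sqrt (Re (cinner ((\<lambda>x. x) x) x) * Re (cinner ((\<lambda>x. x) y) y))"
    by (rule herm_bound) (auto simp: lin_id selfadj_def cinner_self_Re_nonneg cinner_self_Im abs_of_nonneg)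
  then show ?thesis by (simp add: cinner_self_Re real_sqrt_mult)
qed

lemma Re_cinner_le: "Re (cinner x y) \<le> norm x * norm y"
  using cauchy_schwarz[of x y] complex_Re_le_cmod order_trans by blast

lemma bounded_bilinear_cinner: "bounded_bilinear (cinner :: 'a::complex_hilbert_space \<Rightarrow> 'a \<Rightarrow> complex)"
proof
  fix a a' b b' :: 'a and r :: real
  show "cinner (a + a') b = cinner a b + cinner a' b" by (rule cinner_add_left)
  show "cinner a (b + b') = cinner a b + cinner a b'" by (rule cinner_add_right)
  show "cinner (scaleR r a) b = scaleR r (cinner a b)" by (simp add: cinner_scaleR_left scaleR_conv_of_real)
  show "cinner a (scaleR r b) = scaleR r (cinner a b)" by (simp add: cinner_scaleR_right scaleR_conv_of_real)
  show "\<exists>K. \<forall>a b. norm (cinner a b) \<le> norm a * norm b * K"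
    by (intro exI[of _ 1]) (simp add: cauchy_schwarz)
qed

lemmas tendsto_cinner = bounded_bilinear.tendsto[OF bounded_bilinear_cinner]
lemmas continuous_on_cinner = bounded_bilinear.continuous_on[OF bounded_bilinear_cinner]

lemma real_form_selfadj:
  assumes "lin T" and R: "\<And>x. Im (cinner (T x) x) = 0"
  shows "selfadj T"
  unfolding selfadj_def
proof (intro allI)
  fix x y
  define \<alpha> where "\<alpha> = cinner (T x) y"
  define \<beta> where "\<beta> = cinner (T y) x"
  have "Im (cinner (T (x + y)) (x + y)) = 0" by (rule R)
  then have 1: "Im \<alpha> + Im \<beta> = 0"
    using R[of x] R[of y] by (simp add: lin_cinner_add[OF assms(1)] \<alpha>_def \<beta>_def)
  have "Im (cinner (T (x + scaleC \<i> y)) (x + scaleC \<i> y)) = 0" by (rule R)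
  then have 2: "Re \<beta> - Re \<alpha> = 0"
    using R[of x] R[of y]
    by (simp add: lin_cinner_add[OF assms(1)] \<alpha>_def \<beta>_def linD_scaleC[OF assms(1)]
        cinner_scaleC_left cinner_scaleC_right)
  have "cinner x (T y) = cnj \<beta>" by (simp add: \<beta>_def cinner_commute[of x])
  also have "\<dots> = \<alpha>" using 1 2 by (simp add: complex_eq_iff)
  finally show "cinner (T x) y = cinner x (T y)" by (simp add: \<alpha>_def)
qed

lemma pos_op_selfadj: "pos_op P \<Longrightarrow> selfadj P"
  unfolding pos_op_def
  by (rule real_form_selfadj) (auto simp: bounded_clinear_lin complex_is_Real_iff)

lemma pos_op_lin: "pos_op P \<Longrightarrow> lin P"
  unfolding pos_op_def by (simp add: bounded_clinear_lin)

lemma pos_op_Re: "pos_op P \<Longrightarrow> 0 \<le> Re (cinner (P u) u)"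
  unfolding pos_op_def by simp

lemma pos_cs:
  assumes "pos_op P"
  shows "cmod (cinner (P u) v) \<le> sqrt (Re (cinner (P u) u) * Re (cinner (P v) v))"
proof -
  have "cmod (cinner (P u) v) \<le> 1 * sqrt (Re (cinner (P u) u) * Re (cinner (P v) v))"
    by (rule herm_bound) (use assms in \<open>auto simp: pos_op_lin pos_op_selfadj pos_op_Re\<close>)
  then show ?thesis by simp
qed

lemma pos_zero_form: "pos_op P \<Longrightarrow> Re (cinner (P u) u) = 0 \<Longrightarrow> P u = 0"
  using pos_cs[of P u "P u"] by (simp add: cinner_self)



section \<open>Minimal norm, Riesz, adjoints\<close>

lemma min_norm_exists:
  fixes K :: "'a::complex_hilbert_space set"
  assumes ne: "K \<noteq> {}" and cl: "closed K"
    and mid: "\<And>x y. x \<in> K \<Longrightarrow> y \<in> K \<Longrightarrow> scaleR (1/2) (x + y) \<in> K"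
  shows "\<exists>x0\<in>K. \<forall>x\<in>K. norm x0 \<le> norm x"
proof -
  define d where "d = Inf (norm ` K)"
  have bdd: "bdd_below (norm ` K)" by (rule bdd_belowI[of _ 0]) auto
  have d_le: "d \<le> norm x" if "x \<in> K" for x
    unfolding d_def using bdd that by (simp add: cInf_lower)
  have d0: "0 \<le> d" unfolding d_def using ne by (auto intro!: cInf_greatest)
  have ex: "\<exists>x\<in>K. norm x ^ 2 < d ^ 2 + 1 / (real n + 1)" for n
  proof -
    have "sqrt (d ^ 2) < sqrt (d ^ 2 + 1 / (real n + 1))"
      by (intro real_sqrt_less_mono) simp
    then have "d < sqrt (d ^ 2 + 1 / (real n + 1))" using d0 by simp
    then have "\<exists>y\<in>norm ` K. y < sqrt (d ^ 2 + 1 / (real n + 1))"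
      unfolding d_def by (intro cInf_lessD) (use ne in auto)
    then obtain x where x: "x \<in> K" "norm x < sqrt (d ^ 2 + 1 / (real n + 1))" by auto
    then have "norm x ^ 2 < (sqrt (d ^ 2 + 1 / (real n + 1))) ^ 2"
      by (intro power_strict_mono) auto
    then have "norm x ^ 2 < d ^ 2 + 1 / (real n + 1)"
      by (simp add: add_nonneg_nonneg)
    then show ?thesis using x by blast
  qed
  have "\<forall>n. \<exists>x. x \<in> K \<and> norm x ^ 2 < d ^ 2 + 1 / (real n + 1)" using ex by blast
  then obtain xs where "\<forall>n. xs n \<in> K \<and> norm (xs n) ^ 2 < d ^ 2 + 1 / (real n + 1)"
    by (metis choice)
  then have xs: "\<And>n. xs n \<in> K" "\<And>n. norm (xs n) ^ 2 < d ^ 2 + 1 / (real n + 1)" by auto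
  have dist_bound: "norm (xs m - xs n) ^ 2 \<le> 2 / (real m + 1) + 2 / (real n + 1)" for m n
  proof -
    have "scaleR (1/2) (xs m + xs n) \<in> K" using xs mid by blast
    then have "d \<le> norm (scaleR (1/2) (xs m + xs n))" by (rule d_le)
    then have "d \<le> norm (xs m + xs n) / 2" by simp
    then have "d ^ 2 \<le> (norm (xs m + xs n) / 2) ^ 2" using d0 by (intro power_mono) auto
    then have "d ^ 2 \<le> norm (xs m + xs n) ^ 2 / 4" by (simp add: power_divide)
    then have "norm (xs m + xs n) ^ 2 \<ge> 4 * d ^ 2" by simp
    moreover have "norm (xs m - xs n) ^ 2 = 2 * norm (xs m) ^ 2 + 2 * norm (xs n) ^ 2 - norm (xs m + xs n) ^ 2"
      using parallelogram[of "xs m" "xs n"] by simp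
    ultimately show ?thesis using xs(2)[of m] xs(2)[of n] by simp
  qed
  have "Cauchy xs"
  proof (rule CauchyI)
    fix e :: real assume e: "e > 0"
    obtain N :: nat where N: "4 / (e ^ 2) < real N" using reals_Archimedean2 by blast
    have "norm (xs m - xs n) < e" if "m \<ge> N" "n \<ge> N" for m n
    proof -
      have "0 < 4 / e ^ 2" using e by simp
      then have Np: "real N > 0" using N by linarith
      have "2 / (real m + 1) \<le> 2 / real N" using that Np by (simp add: frac_le)
      moreover have "2 / (real n + 1) \<le> 2 / real N" using that Np by (simp add: frac_le)
      ultimately have "norm (xs m - xs n) ^ 2 \<le> 4 / real N" using dist_bound[of m n] by simp
      also have "\<dots> < e ^ 2" using N Np e by (simp add: field_simps)
      finally show ?thesis using e by (simp add: power_less_imp_less_base)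
    qed
    then show "\<exists>M. \<forall>m\<ge>M. \<forall>n\<ge>M. norm (xs m - xs n) < e" by blast
  qed
  then obtain x0 where x0: "xs \<longlonglongrightarrow> x0" using Cauchy_convergent_iff convergent_def by blast
  have "x0 \<in> K" by (rule closed_sequentially[OF cl xs(1) x0])
  moreover have "norm x0 \<le> norm x" if "x \<in> K" for x
  proof -
    have l1: "(\<lambda>n. norm (xs n) ^ 2) \<longlonglongrightarrow> norm x0 ^ 2" by (intro tendsto_intros x0)
    have l2: "(\<lambda>n. d ^ 2 + 1 / (real n + 1)) \<longlonglongrightarrow> d ^ 2 + 0"
      using LIMSEQ_inverse_real_of_nat by (intro tendsto_intros) (simp add: inverse_eq_divide add.commute)
    have "\<forall>n\<ge>0. norm (xs n) ^ 2 \<le> d ^ 2 + 1 / (real n + 1)" using xs(2) less_imp_le by blast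
    then have "norm x0 ^ 2 \<le> d ^ 2 + 0"
      by (intro LIMSEQ_le[OF l1 l2]) blast
    then have "norm x0 ^ 2 \<le> d ^ 2" by (simp only: add_0_right)
    then have "norm x0 \<le> d" using d0 by (rule power2_le_imp_le)
    then show ?thesis using d_le[OF that] by simp
  qed
  ultimately show ?thesis by blast
qed

lemma small_quadratic:
  fixes w k :: real
  assumes "0 \<le> w" "0 \<le> k" and H: "\<And>s. s > 0 \<Longrightarrow> 2 * s * w \<le> s ^ 2 * w * k"
  shows "w = 0"
proof -
  define s where "s = 1 / (k + 1)"
  have s: "s > 0" using assms by (simp add: s_def add_nonneg_pos)
  have sk: "s * k < 1" using assms by (simp add: s_def)
  have "2 * s * w \<le> s * w * (s * k)" using H[OF s] by (simp add: power2_eq_square algebra_simps)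
  also have "\<dots> \<le> s * w * 1" using sk s assms by (intro mult_left_mono) auto
  finally have "s * w \<le> 0" by simp
  then show ?thesis using s assms by (simp add: mult_le_0_iff)
qed

lemma riesz:
  fixes f :: "'a::complex_hilbert_space \<Rightarrow> complex"
  assumes add: "\<And>x y. f (x + y) = f x + f y" and sc: "\<And>c x. f (scaleC c x) = c * f x"
    and bd: "\<And>x. cmod (f x) \<le> C * norm x"
  shows "\<exists>v. \<forall>x. f x = cinner x v"
proof (cases "\<forall>x. f x = 0")
  case True then show ?thesis by (intro exI[of _ 0]) simp
next
  case False
  then obtain x1 where x1: "f x1 \<noteq> 0" by blast
  have bl: "bounded_linear f"
    by (rule bounded_linear_intro[where K=C]) (auto simp: add scaleR_scaleC sc scaleR_conv_of_real bd mult.commute)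
  define K where "K = {x. f x = 1}"
  have "scaleC (1 / f x1) x1 \<in> K" using x1 by (simp add: K_def sc)
  then have ne: "K \<noteq> {}" by blast
  have cl: "closed K" unfolding K_def
    by (rule closed_Collect_eq) (auto intro: linear_continuous_on bl)
  have mid: "scaleR (1/2) (x + y) \<in> K" if "x \<in> K" "y \<in> K" for x y
    using that by (simp add: K_def scaleR_scaleC sc add)
  obtain x0 where x0: "x0 \<in> K" "\<And>x. x \<in> K \<Longrightarrow> norm x0 \<le> norm x"
    using min_norm_exists[OF ne cl mid] by blast
  have fx0: "f x0 = 1" using x0 by (simp add: K_def)
  have orth: "cinner k x0 = 0" if k: "f k = 0" for k
  proof -
    define w where "w = cmod (cinner x0 k) ^ 2"
    have H2: "2 * s * w \<le> s ^ 2 * w * norm k ^ 2" if s: "s > 0" for s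
    proof -
      define t where "t = - (complex_of_real s * cinner x0 k)"
      have "x0 + scaleC t k \<in> K" using fx0 k by (simp add: K_def add sc)
      then have "norm x0 ^ 2 \<le> norm (x0 + scaleC t k) ^ 2" using x0(2) by (simp add: power_mono)
      also have "\<dots> = norm x0 ^ 2 + norm (scaleC t k) ^ 2 + 2 * Re (cinner x0 (scaleC t k))"
        by (rule norm_add_sq)
      also have "cinner x0 (scaleC t k) = - complex_of_real s * (cinner x0 k * cnj (cinner x0 k))"
        by (simp add: t_def cinner_scaleC_right mult.commute)
      also have "cinner x0 k * cnj (cinner x0 k) = complex_of_real w"
        unfolding w_def by (rule complex_norm_square[symmetric])
      also have "norm (scaleC t k) ^ 2 = s ^ 2 * w * norm k ^ 2"
        using s by (simp add: norm_scaleC t_def w_def power_mult_distrib norm_mult)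
      finally show ?thesis by (simp add: algebra_simps)
    qed
    have "w = 0" by (rule small_quadratic[of w "norm k ^ 2", OF _ _ H2]) (auto simp: w_def)
    then show ?thesis by (simp add: w_def) (metis cinner_commute complex_cnj_zero)
  qed
  have x0nz: "x0 \<noteq> 0" using fx0 sc[of 0 0] by auto
  define v where "v = scaleC (complex_of_real (1 / norm x0 ^ 2)) x0"
  show ?thesis
  proof (intro exI allI)
    fix x
    have "f (x - scaleC (f x) x0) = 0" using fx0 add[of "x - scaleC (f x) x0" "scaleC (f x) x0"] sc
      by simp
    then have "cinner (x - scaleC (f x) x0) x0 = 0" by (rule orth)
    then have "cinner x x0 = f x * complex_of_real (norm x0 ^ 2)"
      by (simp add: cinner_diff_left cinner_scaleC_left cinner_self)
    then show "f x = cinner x v"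
      using x0nz by (simp add: v_def cinner_scaleC_right)
  qed
qed

lemma cinner_ext_right: "(\<And>z. cinner z x = cinner z y) \<Longrightarrow> x = y"
  by (metis cinner_diff_right cinner_self_eq_0 eq_iff_diff_eq_0)

lemma adjoint_exists:
  assumes T: "bounded_clinear T"
  shows "\<exists>S. \<forall>x y. cinner (T x) y = cinner x (S y)"
proof -
  have "\<exists>v. \<forall>x. cinner (T x) y = cinner x v" for y
  proof (rule riesz)
    fix x x' and c
    show "cinner (T (x + x')) y = cinner (T x) y + cinner (T x') y"
      using T by (simp add: bounded_clinear_lin linD_add cinner_add_left)
    show "cinner (T (scaleC c x)) y = c * cinner (T x) y"
      using T by (simp add: bounded_clinear_lin linD_scaleC cinner_scaleC_left)
    show "cmod (cinner (T x) y) \<le> (onorm T * norm y) * norm x"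
    proof -
      have "cmod (cinner (T x) y) \<le> norm (T x) * norm y" by (rule cauchy_schwarz)
      also have "\<dots> \<le> (onorm T * norm x) * norm y"
        by (intro mult_right_mono bounded_clinear_onorm[OF T]) simp
      finally show ?thesis by (simp add: algebra_simps)
    qed
  qed
  then have "\<forall>y. \<exists>v. \<forall>x. cinner (T x) y = cinner x v" by blast
  then obtain S where "\<forall>y. \<forall>x. cinner (T x) y = cinner x (S y)" by (metis choice)
  then show ?thesis by blast
qed

lemma adj_prop:
  assumes "bounded_clinear T"
  shows "cinner (T x) y = cinner x (adj T y)"
proof -
  have "\<forall>x y. cinner (T x) y = cinner x (adj T y)"
    unfolding adj_def by (rule someI_ex[OF adjoint_exists[OF assms]])
  then show ?thesis by blast
qed

lemma adj_prop': "bounded_clinear T \<Longrightarrow> cinner (adj T y) x = cinner y (T x)"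
  by (metis adj_prop cinner_commute)

lemma adj_unique:
  assumes T: "bounded_clinear T" and S: "\<And>x y. cinner (T x) y = cinner x (S y)"
  shows "adj T = S"
proof
  fix y show "adj T y = S y"
    by (rule cinner_ext_right) (metis S adj_prop[OF T])
qed

lemma adj_bounded_clinear:
  assumes T: "bounded_clinear T"
  shows "bounded_clinear (adj T)"
proof (rule bounded_clinearI[where K="onorm T"])
  show "lin (adj T)" unfolding lin_def
  proof (intro conjI allI)
    fix x y
    show "adj T (x + y) = adj T x + adj T y"
      by (rule cinner_ext_right) (simp add: adj_prop[OF T, symmetric] cinner_add_right)
    fix c
    show "adj T (scaleC c x) = scaleC c (adj T x)"
      by (rule cinner_ext_right) (simp add: adj_prop[OF T, symmetric] cinner_scaleC_right)
  qed
  fix y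
  have "norm (adj T y) ^ 2 = Re (cinner (T (adj T y)) y)"
    by (simp add: adj_prop[OF T] flip: cinner_self_Re)
  also have "\<dots> \<le> norm (T (adj T y)) * norm y" by (rule Re_cinner_le)
  also have "\<dots> \<le> onorm T * norm (adj T y) * norm y"
    by (intro mult_right_mono bounded_clinear_onorm[OF T]) simp
  finally have "norm (adj T y) * norm (adj T y) \<le> (onorm T * norm y) * norm (adj T y)"
    by (simp add: power2_eq_square algebra_simps)
  then show "norm (adj T y) \<le> onorm T * norm y"
    by (cases "adj T y = 0") (auto simp: bounded_clinear_onorm_nonneg[OF T] mult_le_cancel_right)
qed

lemma adj_adj: "bounded_clinear T \<Longrightarrow> adj (adj T) = T"
  using adj_prop'[of T] by (intro adj_unique adj_bounded_clinear) auto

lemma selfadj_adj_comp: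
  "bounded_clinear A \<Longrightarrow> selfadj (adj A \<circ> A)"
proof -
  assume A: "bounded_clinear A"
  show ?thesis unfolding selfadj_def
  proof (intro allI)
    fix x y
    have "cinner ((adj A \<circ> A) x) y = cinner (A x) (A y)" using adj_prop'[OF A, of "A x" y] by simp
    also have "\<dots> = cinner x ((adj A \<circ> A) y)" using adj_prop[OF A, of x "A y"] by simp
    finally show "cinner ((adj A \<circ> A) x) y = cinner x ((adj A \<circ> A) y)" .
  qed
qed



section \<open>Norm bounds, powers, power series of operators, Neumann series\<close>

lemma bounded_linear_scaleC: "bounded_linear (scaleC a :: 'a::complex_hilbert_space \<Rightarrow> 'a)"
proof (rule bounded_linear_intro[where K="cmod a"])
  fix x y :: 'a and r :: real
  show "scaleC a (x + y) = scaleC a x + scaleC a y" by (rule scaleC_add_right)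
  show "scaleC a (scaleR r x) = scaleR r (scaleC a x)"
    by (simp add: scaleR_scaleC scaleC_scaleC mult.commute)
  show "norm (scaleC a x) \<le> norm x * cmod a" by (simp add: norm_scaleC mult.commute)
qed

lemma selfadj_norm_bound:
  assumes "lin T" "selfadj T" "0 \<le> m" and H: "\<And>x. \<bar>Re (cinner (T x) x)\<bar> \<le> m * norm x ^ 2"
  shows "norm (T x) \<le> m * norm x"
proof -
  have "cmod (cinner (T x) (T x)) \<le> m * sqrt (Re (cinner ((\<lambda>x. x) x) x) * Re (cinner ((\<lambda>x. x) (T x)) (T x)))"
    by (rule herm_bound) (use assms in \<open>auto simp: lin_id selfadj_def cinner_self_Re_nonneg cinner_self_Re\<close>)
  then have "norm (T x) ^ 2 \<le> m * (norm x * norm (T x))"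
    by (simp add: cinner_self_Re real_sqrt_mult cinner_self norm_power)
  then have "norm (T x) * norm (T x) \<le> (m * norm x) * norm (T x)"
    by (simp add: power2_eq_square algebra_simps)
  then show ?thesis
    by (cases "T x = 0") (use assms in \<open>auto simp: mult_le_cancel_right\<close>)
qed

lemma pow_bcl: "bounded_clinear T \<Longrightarrow> bounded_clinear (T ^^ k)"
proof (induction k)
  case 0 then show ?case using bounded_clinear_id by (simp add: id_def)
next
  case (Suc k) then show ?case by (simp add: bounded_clinear_comp')
qed

lemma pow_lin: "lin T \<Longrightarrow> lin (T ^^ k)"
proof (induction k)
  case 0 then show ?case by (simp add: lin_id)
next
  case (Suc k) then show ?case by (simp add: lin_comp')
qed

lemma pow_norm:
  fixes T :: "'a::real_normed_vector \<Rightarrow> 'a"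
  assumes "\<And>x. norm (T x) \<le> M * norm x" "0 \<le> M"
  shows "norm ((T ^^ k) x) \<le> M ^ k * norm x"
proof (induction k)
  case 0 then show ?case by simp
next
  case (Suc k)
  have "norm ((T ^^ Suc k) x) = norm (T ((T ^^ k) x))" by simp
  also have "\<dots> \<le> M * norm ((T ^^ k) x)" by (rule assms(1))
  also have "\<dots> \<le> M * (M ^ k * norm x)" using Suc assms(2) by (rule mult_left_mono)
  finally show ?case by (simp add: mult.assoc)
qed

lemma pow_comm:
  fixes T :: "'a \<Rightarrow> 'a" and T' :: "'b \<Rightarrow> 'b"
  assumes "\<And>x. S (T x) = T' (S x)"
  shows "S ((T ^^ k) x) = (T' ^^ k) (S x)"
  by (induction k) (simp_all add: assms)

lemma pow_add_apply: "(T ^^ (j + k)) x = (T ^^ j) ((T ^^ k) x)" for T :: "'a \<Rightarrow> 'a"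
  by (simp add: funpow_add)

lemma pow_selfadj: "selfadj T \<Longrightarrow> selfadj (T ^^ k)"
proof (induction k)
  case 0 then show ?case by (simp add: selfadj_def)
next
  case (Suc k) then show ?case by (simp add: selfadj_def funpow_swap1)
qed

definition pser :: "(nat \<Rightarrow> real) \<Rightarrow> ('a::complex_hilbert_space \<Rightarrow> 'a) \<Rightarrow> 'a \<Rightarrow> 'a" where
  "pser c T x = (\<Sum>k. scaleR (c k) ((T ^^ k) x))"

locale pser_ctx =
  fixes c :: "nat \<Rightarrow> real" and T :: "'a::complex_hilbert_space \<Rightarrow> 'a" and M :: real
  assumes T: "bounded_clinear T" and TM: "\<And>x. norm (T x) \<le> M * norm x" and M: "0 \<le> M"
    and sc: "summable (\<lambda>k. \<bar>c k\<bar> * M ^ k)"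
begin

lemma powM: "norm ((T ^^ k) x) \<le> M ^ k * norm x"
  by (rule pow_norm[OF TM M])

lemma term_bound: "norm (scaleR (c k) ((T ^^ k) x)) \<le> \<bar>c k\<bar> * M ^ k * norm x"
  using powM[of k x] by (simp add: mult.assoc mult_left_mono)

lemma summable_norm_terms: "summable (\<lambda>k. norm (scaleR (c k) ((T ^^ k) x)))"
  using term_bound by (intro summable_comparison_test'[where N=0, OF summable_mult2[OF sc, of "norm x"]]) simp

lemma summable_terms: "summable (\<lambda>k. scaleR (c k) ((T ^^ k) x))"
  by (rule summable_norm_cancel[OF summable_norm_terms])

definition C where "C = (\<Sum>k. \<bar>c k\<bar> * M ^ k)"

lemma pser_norm: "norm (pser c T x) \<le> C * norm x"
proof -
  have "norm (pser c T x) \<le> (\<Sum>k. norm (scaleR (c k) ((T ^^ k) x)))"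
    unfolding pser_def by (rule summable_norm[OF summable_norm_terms])
  also have "\<dots> \<le> (\<Sum>k. \<bar>c k\<bar> * M ^ k * norm x)"
    by (rule suminf_le[OF term_bound summable_norm_terms summable_mult2[OF sc]])
  also have "\<dots> = C * norm x" by (simp add: C_def suminf_mult2[OF sc])
  finally show ?thesis .
qed

lemma C_nonneg: "0 \<le> C"
  unfolding C_def by (rule suminf_nonneg[OF sc]) (simp add: M)

lemma pser_add: "pser c T (x + y) = pser c T x + pser c T y"
proof -
  have "pser c T x + pser c T y = (\<Sum>k. scaleR (c k) ((T ^^ k) x) + scaleR (c k) ((T ^^ k) y))"
    unfolding pser_def by (rule suminf_add[OF summable_terms summable_terms])
  also have "\<dots> = pser c T (x + y)"
    unfolding pser_def using bounded_clinear_lin[OF pow_bcl[OF T]]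
    by (simp add: linD_add scaleR_add_right)
  finally show ?thesis by simp
qed

lemma pser_scaleC: "pser c T (scaleC a x) = scaleC a (pser c T x)"
proof -
  have "scaleC a (pser c T x) = (\<Sum>k. scaleC a (scaleR (c k) ((T ^^ k) x)))"
    unfolding pser_def by (rule bounded_linear.suminf[OF bounded_linear_scaleC summable_terms])
  also have "\<dots> = pser c T (scaleC a x)"
    unfolding pser_def using bounded_clinear_lin[OF pow_bcl[OF T]]
    by (simp add: linD_scaleC scaleR_scaleC scaleC_scaleC mult.commute)
  finally show ?thesis by simp
qed

lemma pser_lin: "lin (pser c T)"
  by (simp add: lin_def pser_add pser_scaleC)

lemma pser_bcl: "bounded_clinear (pser c T)"
  by (rule bounded_clinearI[OF pser_lin pser_norm])

lemma pser_comm: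
  assumes S: "bounded_clinear S" and comm: "\<And>x. S (T x) = T' (S x)"
  shows "S (pser c T x) = pser c T' (S x)"
proof -
  have "S (pser c T x) = (\<Sum>k. S (scaleR (c k) ((T ^^ k) x)))"
    unfolding pser_def by (rule bounded_linear.suminf[OF bounded_clinear_bl[OF S] summable_terms])
  also have "\<dots> = pser c T' (S x)"
    unfolding pser_def using bounded_clinear_lin[OF S]
    by (simp add: lin_scaleR pow_comm[of S T T', OF comm])
  finally show ?thesis .
qed

lemma pser_cinner_left: "cinner (pser c T x) y = (\<Sum>k. complex_of_real (c k) * cinner ((T ^^ k) x) y)"
proof -
  have bl: "bounded_linear (\<lambda>v. cinner v y)"
    by (rule bounded_bilinear.bounded_linear_left[OF bounded_bilinear_cinner])
  show ?thesis unfolding pser_def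
    by (subst bounded_linear.suminf[OF bl summable_terms]) (simp add: cinner_scaleR_left)
qed

lemma pser_cinner_right: "cinner y (pser c T x) = (\<Sum>k. complex_of_real (c k) * cinner y ((T ^^ k) x))"
proof -
  have bl: "bounded_linear (\<lambda>v. cinner y v)"
    by (rule bounded_bilinear.bounded_linear_right[OF bounded_bilinear_cinner])
  show ?thesis unfolding pser_def
    by (subst bounded_linear.suminf[OF bl summable_terms]) (simp add: cinner_scaleR_right)
qed

lemma pser_selfadj: "selfadj T \<Longrightarrow> selfadj (pser c T)"
  unfolding selfadj_def
proof (intro allI)
  fix x y assume "\<forall>x y. cinner (T x) y = cinner x (T y)"
  then have "selfadj T" by (simp add: selfadj_def)
  then have st: "cinner ((T ^^ k) x) y = cinner x ((T ^^ k) y)" for k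
    using pow_selfadj[of T k] by (simp add: selfadj_def)
  show "cinner (pser c T x) y = cinner x (pser c T y)"
    by (simp add: pser_cinner_left pser_cinner_right st)
qed

lemma pser_Re_cinner: "Re (cinner (pser c T x) x) = (\<Sum>k. c k * Re (cinner ((T ^^ k) x) x))"
proof -
  have bl: "bounded_linear (\<lambda>v. Re (cinner v x))"
    by (rule bounded_linear_compose[OF bounded_linear_Re
          bounded_bilinear.bounded_linear_left[OF bounded_bilinear_cinner]])
  show ?thesis unfolding pser_def
    by (subst bounded_linear.suminf[OF bl summable_terms]) (simp add: cinner_scaleR_left)
qed

lemma partial_sums_tendsto: "(\<lambda>n. \<Sum>k<n. scaleR (c k) ((T ^^ k) x)) \<longlonglongrightarrow> pser c T x"
  unfolding pser_def by (rule summable_LIMSEQ[OF summable_terms])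

end

lemma neumann:
  fixes B :: "'a::complex_hilbert_space \<Rightarrow> 'a"
  assumes B: "bounded_clinear B" and z: "onorm B < cmod z"
  shows "z \<notin> spectrum_op B"
proof -
  define M where "M = onorm B"
  have M: "0 \<le> M" using bounded_clinear_onorm_nonneg[OF B] by (simp add: M_def)
  have BM: "norm (B x) \<le> M * norm x" for x unfolding M_def by (rule bounded_clinear_onorm[OF B])
  have zpos: "cmod z > 0" using M z M_def by linarith
  then have z0: "z \<noteq> 0" by auto
  define q where "q = M / cmod z"
  have q: "0 \<le> q" "q < 1" using M z zpos by (simp_all add: q_def M_def)
  define u where "u y k = scaleC (1 / z ^ k) ((B ^^ k) y)" for y k
  have ubound: "norm (u y k) \<le> q ^ k * norm y" for y k
  proof -
    have "norm (u y k) = norm ((B ^^ k) y) / cmod z ^ k" by (simp add: u_def norm_scaleC norm_divide norm_power)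
    also have "\<dots> \<le> M ^ k * norm y / cmod z ^ k"
      by (intro divide_right_mono pow_norm[OF BM M]) simp
    also have "\<dots> = q ^ k * norm y" by (simp add: q_def power_divide)
    finally show ?thesis .
  qed
  have gs: "summable (\<lambda>k. q ^ k * norm y)" for y
    using q by (intro summable_mult2 summable_geometric) simp
  have us: "summable (u y)" for y
    by (rule summable_norm_cancel, rule summable_comparison_test[OF _ gs]) (auto intro: ubound)
  define S where "S y = - scaleC (1 / z) (suminf (u y))" for y
  have uB: "u (B y) k = B (u y k)" for y k
    using pow_comm[of B B B k y] bounded_clinear_lin[OF B] by (simp add: u_def linD_scaleC)
  have Bu: "scaleC (1/z) (B (u y k)) = u y (Suc k)" for y k
    using bounded_clinear_lin[OF B] z0 by (simp add: u_def linD_scaleC scaleC_scaleC field_simps)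
  have u0: "u y 0 = y" for y by (simp add: u_def scaleC_one)
  have BS: "B (S y) - scaleC z (S y) = y" for y
  proof -
    have "B (suminf (u y)) = (\<Sum>k. B (u y k))"
      by (rule bounded_linear.suminf[OF bounded_clinear_bl[OF B] us])
    then have "scaleC (1/z) (B (suminf (u y))) = scaleC (1/z) (\<Sum>k. B (u y k))" by simp
    also have "\<dots> = (\<Sum>k. scaleC (1/z) (B (u y k)))"
      by (rule bounded_linear.suminf[OF bounded_linear_scaleC
            bounded_linear.summable[OF bounded_clinear_bl[OF B] us]])
    also have "\<dots> = (\<Sum>k. u y (Suc k))" by (simp add: Bu)
    also have "\<dots> = suminf (u y) - y" using suminf_split_head[OF us[of y]] by (simp add: u0)
    finally have 1: "scaleC (1/z) (B (suminf (u y))) = suminf (u y) - y" .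
    have "B (S y) = - scaleC (1/z) (B (suminf (u y)))"
      using bounded_clinear_lin[OF B] by (simp add: S_def lin_minus linD_scaleC)
    also have "\<dots> = y - suminf (u y)" using 1 by simp
    finally have 2: "B (S y) = y - suminf (u y)" .
    have "scaleC z (S y) = - suminf (u y)"
      using z0 by (simp add: S_def scaleC_minus_right scaleC_scaleC scaleC_one)
    then show ?thesis using 2 by simp
  qed
  have Slin: "lin S" unfolding lin_def
  proof (intro conjI allI)
    fix x y
    have "u (x + y) = (\<lambda>k. u x k + u y k)"
      using bounded_clinear_lin[OF pow_bcl[OF B]]
      by (simp add: fun_eq_iff u_def linD_add scaleC_add_right)
    then have "suminf (u (x + y)) = suminf (u x) + suminf (u y)"
      using suminf_add[OF us us] by simp
    then show "S (x + y) = S x + S y" by (simp add: S_def scaleC_add_right)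
    fix a
    have "u (scaleC a x) = (\<lambda>k. scaleC a (u x k))"
      using bounded_clinear_lin[OF pow_bcl[OF B]]
      by (simp add: fun_eq_iff u_def linD_scaleC scaleC_scaleC mult.commute)
    then have "suminf (u (scaleC a x)) = scaleC a (suminf (u x))"
      using bounded_linear.suminf[OF bounded_linear_scaleC us] by simp
    then show "S (scaleC a x) = scaleC a (S x)"
      by (simp add: S_def scaleC_minus_right scaleC_scaleC mult.commute)
  qed
  have SB: "S (B y) = B (S y)" for y
  proof -
    have "u (B y) = (\<lambda>k. B (u y k))" using uB by (simp add: fun_eq_iff)
    then show ?thesis
      using bounded_clinear_lin[OF B] bounded_linear.suminf[OF bounded_clinear_bl[OF B] us, of y]
      by (simp add: S_def lin_minus linD_scaleC)
  qed
  have Sbd: "norm (S y) \<le> ((1 / cmod z) * (\<Sum>k. q ^ k)) * norm y" for y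
  proof -
    have "norm (suminf (u y)) \<le> (\<Sum>k. norm (u y k))"
      by (rule summable_norm, rule summable_comparison_test[OF _ gs]) (auto intro: ubound)
    also have "\<dots> \<le> (\<Sum>k. q ^ k * norm y)"
      by (rule suminf_le[OF ubound _ gs]) (rule summable_comparison_test[OF _ gs], auto intro: ubound)
    also have "\<dots> = (\<Sum>k. q ^ k) * norm y" by (rule suminf_mult2[symmetric]) (use q in \<open>simp add: summable_geometric\<close>)
    finally show ?thesis by (simp add: S_def norm_scaleC norm_divide divide_right_mono)
  qed
  have Sbcl: "bounded_clinear S" by (rule bounded_clinearI[OF Slin Sbd])
  have "S \<circ> (\<lambda>x. B x - scaleC z x) = id"
  proof
    fix y
    have "S (B y - scaleC z y) = S (B y) - scaleC z (S y)" by (simp add: lin_diff[OF Slin] linD_scaleC[OF Slin])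
    then show "(S \<circ> (\<lambda>x. B x - scaleC z x)) y = id y" using BS[of y] SB[of y] by simp
  qed
  moreover have "(\<lambda>x. B x - scaleC z x) \<circ> S = id"
    using BS by (simp add: fun_eq_iff)
  ultimately show ?thesis unfolding spectrum_op_def using Sbcl by blast
qed

lemma spectrum_bound: "bounded_clinear B \<Longrightarrow> z \<in> spectrum_op B \<Longrightarrow> cmod z \<le> onorm B"
  using neumann by force

lemma spectrum_bdd: "bounded_clinear B \<Longrightarrow> bdd_above (insert 0 (cmod ` spectrum_op B))"
  by (rule bdd_aboveI[of _ "onorm B"]) (auto dest: spectrum_bound simp: bounded_clinear_onorm_nonneg)

lemma specrad_nonneg: "bounded_clinear B \<Longrightarrow> 0 \<le> specrad B"
  unfolding specrad_def by (rule cSup_upper[OF insertI1 spectrum_bdd])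

lemma specrad_ge: "bounded_clinear B \<Longrightarrow> z \<in> spectrum_op B \<Longrightarrow> cmod z \<le> specrad B"
  unfolding specrad_def by (rule cSup_upper[OF _ spectrum_bdd]) auto



section \<open>Square-root coefficients\<close>

definition cc :: "nat \<Rightarrow> real" where
  "cc k = (-1) ^ k * ((1/2::real) gchoose k)"

lemma cc_0: "cc 0 = 1" by (simp add: cc_def)

lemma cc_Suc: "cc (Suc k) * (real k + 1) = cc k * (real k - 1/2)"
proof -
  have "(1/2::real) * ((1/2) gchoose k) = real k * ((1/2) gchoose k) + real (Suc k) * ((1/2) gchoose (Suc k))"
    by (rule gbinomial_mult_1)
  then have e: "real (Suc k) * ((1/2::real) gchoose (Suc k)) = (1/2 - real k) * ((1/2) gchoose k)"
    by (simp add: algebra_simps)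
  have "cc (Suc k) * (real k + 1) = - ((-1) ^ k * (real (Suc k) * ((1/2::real) gchoose (Suc k))))"
    by (simp add: cc_def algebra_simps)
  also have "\<dots> = - ((-1) ^ k * ((1/2 - real k) * ((1/2) gchoose k)))" by (simp only: e)
  also have "\<dots> = cc k * (real k - 1/2)" by (simp add: cc_def algebra_simps)
  finally show ?thesis .
qed

lemma cc_1: "cc 1 = - 1/2"
  using cc_Suc[of 0] by (simp add: cc_0)

lemma cc_nonpos: "k \<ge> 1 \<Longrightarrow> cc k \<le> 0"
proof (induction k rule: dec_induct)
  case base then show ?case using cc_1 by simp
next
  case (step k)
  have "cc (Suc k) = cc k * (real k - 1/2) / (real k + 1)"
    using cc_Suc[of k] by (simp add: field_simps)
  moreover have "real k - 1/2 \<ge> 0" using step by simp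
  ultimately show ?case using step by (simp add: mult_nonpos_nonneg divide_nonpos_pos)
qed

lemma cc_partial: "(\<Sum>i<Suc n. cc i) = (1 - 2 * real n) * cc n"
proof (induction n)
  case 0 then show ?case by (simp add: cc_0)
next
  case (Suc n)
  have "(\<Sum>i<Suc (Suc n). cc i) = (1 - 2 * real n) * cc n + cc (Suc n)"
    using Suc by simp
  also have "(1 - 2 * real n) * cc n = - 2 * (cc n * (real n - 1/2))" by (simp add: algebra_simps)
  also have "\<dots> = - 2 * (cc (Suc n) * (real n + 1))" by (simp add: cc_Suc)
  finally show ?case by (simp add: algebra_simps)
qed

lemma cc_partial_nonneg: "0 \<le> (\<Sum>i<Suc n. cc i)"
proof (cases "n = 0")
  case True then show ?thesis by (simp add: cc_0)
next
  case False
  then have "cc n \<le> 0" by (intro cc_nonpos) simp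
  moreover have "1 - 2 * real n \<le> 0" using False by simp
  ultimately have "0 \<le> (1 - 2 * real n) * cc n" by (simp add: mult_nonpos_nonpos)
  then show ?thesis by (simp only: cc_partial)
qed

lemma abs_cc_Suc: "\<bar>cc (Suc k)\<bar> = - cc (Suc k)"
  using cc_nonpos[of "Suc k"] by simp

lemma sum_abs_cc_Suc: "(\<Sum>k<n. \<bar>cc (Suc k)\<bar>) = 1 - (\<Sum>i<Suc n. cc i)"
proof -
  have "(\<Sum>i<Suc n. cc i) = cc 0 + (\<Sum>k<n. cc (Suc k))" by (rule sum.lessThan_Suc_shift)
  then show ?thesis by (simp add: abs_cc_Suc sum_negf cc_0)
qed

lemma summable_abs_cc_Suc: "summable (\<lambda>k. \<bar>cc (Suc k)\<bar>)"
proof (rule summableI_nonneg_bounded[where x=1])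
  fix n show "(\<Sum>i<n. \<bar>cc (Suc i)\<bar>) \<le> 1"
    using cc_partial_nonneg[of n] by (subst sum_abs_cc_Suc) linarith
qed simp

lemma suminf_abs_cc_Suc: "(\<Sum>k. \<bar>cc (Suc k)\<bar>) \<le> 1"
proof (rule suminf_le_const[OF summable_abs_cc_Suc])
  fix n show "(\<Sum>i<n. \<bar>cc (Suc i)\<bar>) \<le> 1"
    using cc_partial_nonneg[of n] by (subst sum_abs_cc_Suc) linarith
qed

lemma summable_abs_cc: "summable (\<lambda>k. \<bar>cc k\<bar>)"
  using summable_abs_cc_Suc by (subst summable_Suc_iff[symmetric])

lemma cc_cauchy: "(\<Sum>i\<le>n. cc i * cc (n - i)) = (if n = 0 then 1 else if n = 1 then -1 else 0)"
proof -
  have "(\<Sum>i\<le>n. cc i * cc (n - i)) = (\<Sum>i\<in>{0..n}. (-1) ^ n * (((1/2::real) gchoose i) * ((1/2) gchoose (n - i))))"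
  proof (rule sum.cong)
    show "{..n} = {0..n}" by auto
  next
    fix i assume "i \<in> {0..n}"
    then have "(-1::real) ^ i * (-1) ^ (n - i) = (-1) ^ n" by (simp flip: power_add)
    then show "cc i * cc (n - i) = (-1) ^ n * (((1/2::real) gchoose i) * ((1/2) gchoose (n - i)))"
      by (simp add: cc_def algebra_simps)
  qed
  also have "\<dots> = (-1) ^ n * ((1/2 + 1/2::real) gchoose n)"
    by (simp add: sum_distrib_left[symmetric] gbinomial_Vandermonde)
  also have "(1/2 + 1/2::real) gchoose n = of_nat (1 choose n)"
    using binomial_gbinomial[of 1 n, where 'a=real] by simp
  also have "(1::nat) choose n = (if n \<le> 1 then 1 else 0)"
    by (cases n) (auto simp: binomial_eq_0)
  finally show ?thesis by auto
qed

section \<open>Squares of power series\<close>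

lemma null_comp:
  fixes f :: "nat \<Rightarrow> 'b::real_normed_vector"
  assumes "\<And>N. norm (f N) \<le> g N" "g \<longlonglongrightarrow> 0"
  shows "f \<longlonglongrightarrow> 0"
  by (rule Lim_null_comparison[OF _ assms(2)]) (simp add: assms(1) always_eventually)

context pser_ctx
begin

definition PN where "PN N v = (\<Sum>k<N. scaleR (c k) ((T ^^ k) v))"

lemma PN_norm: "norm (PN N v) \<le> C * norm v"
proof -
  have "norm (PN N v) \<le> (\<Sum>k<N. norm (scaleR (c k) ((T ^^ k) v)))"
    unfolding PN_def by (rule norm_sum)
  also have "\<dots> \<le> (\<Sum>k<N. \<bar>c k\<bar> * M ^ k * norm v)" by (rule sum_mono) (rule term_bound)
  also have "\<dots> = (\<Sum>k<N. \<bar>c k\<bar> * M ^ k) * norm v" by (simp add: sum_distrib_right)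
  also have "\<dots> \<le> C * norm v"
    unfolding C_def by (intro mult_right_mono sum_le_suminf[OF sc]) (auto simp: M)
  finally show ?thesis .
qed

lemma PN_lin: "PN N (v - w) = PN N v - PN N w"
  unfolding PN_def using bounded_clinear_lin[OF pow_bcl[OF T]]
  by (simp add: lin_diff scaleR_diff_right sum_subtractf)

lemma PN_tendsto: "(\<lambda>N. PN N v) \<longlonglongrightarrow> pser c T v"
  unfolding PN_def by (rule partial_sums_tendsto)

lemma PN_PN_tendsto: "(\<lambda>N. PN N (PN N x)) \<longlonglongrightarrow> pser c T (pser c T x)"
proof -
  have 1: "(\<lambda>N. PN N (pser c T x)) \<longlonglongrightarrow> pser c T (pser c T x)" by (rule PN_tendsto)
  have "(\<lambda>N. PN N x - pser c T x) \<longlonglongrightarrow> 0"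
    using PN_tendsto[of x] by (simp add: LIM_zero)
  then have "(\<lambda>N. C * norm (PN N x - pser c T x)) \<longlonglongrightarrow> C * 0"
    by (intro tendsto_intros) (simp add: tendsto_norm_zero)
  then have g: "(\<lambda>N. C * norm (PN N x - pser c T x)) \<longlonglongrightarrow> 0" by simp
  have "norm (PN N (PN N x) - PN N (pser c T x)) \<le> C * norm (PN N x - pser c T x)" for N
    unfolding PN_lin[symmetric] by (rule PN_norm)
  then have "(\<lambda>N. PN N (PN N x) - PN N (pser c T x)) \<longlonglongrightarrow> 0"
    by (rule null_comp[OF _ g])
  from tendsto_add[OF this 1] show ?thesis by simp
qed

lemma PN_PN_expand: "PN N (PN N x) = (\<Sum>(i,j)\<in>{..<N} \<times> {..<N}. scaleR (c i * c j) ((T ^^ (i + j)) x))"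
proof -
  have lin: "\<And>k. lin (T ^^ k)" using bounded_clinear_lin[OF pow_bcl[OF T]] .
  have "PN N (PN N x) = (\<Sum>i<N. \<Sum>j<N. scaleR (c i) ((T ^^ i) (scaleR (c j) ((T ^^ j) x))))"
    unfolding PN_def by (simp add: lin_sum[OF lin] scaleR_sum_right)
  also have "\<dots> = (\<Sum>i<N. \<Sum>j<N. scaleR (c i * c j) ((T ^^ (i + j)) x))"
    by (simp add: lin_scaleR[OF lin] pow_add_apply)
  also have "\<dots> = (\<Sum>(i,j)\<in>{..<N} \<times> {..<N}. scaleR (c i * c j) ((T ^^ (i + j)) x))"
    by (rule sum.cartesian_product)
  finally show ?thesis .
qed

lemma QN_expand:
  assumes d: "\<And>n. (\<Sum>i\<le>n. c i * c (n - i)) = d n"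
  shows "(\<Sum>n<N. scaleR (d n) ((T ^^ n) x)) = (\<Sum>(i,j)\<in>{(i,j). i + j < N}. scaleR (c i * c j) ((T ^^ (i + j)) x))"
proof -
  have "(\<Sum>(i,j)\<in>{(i,j). i + j < N}. scaleR (c i * c j) ((T ^^ (i + j)) x)) =
        (\<Sum>n<N. \<Sum>i\<le>n. scaleR (c i * c (n - i)) ((T ^^ (i + (n - i))) x))"
    by (rule sum.triangle_reindex)
  also have "\<dots> = (\<Sum>n<N. \<Sum>i\<le>n. scaleR (c i * c (n - i)) ((T ^^ n) x))"
    by (intro sum.cong refl) auto
  also have "\<dots> = (\<Sum>n<N. scaleR (d n) ((T ^^ n) x))"
    by (simp add: scaleR_sum_left[symmetric] d)
  finally show ?thesis by simp
qed

lemma pser_square: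
  assumes d: "\<And>n. (\<Sum>i\<le>n. c i * c (n - i)) = d n"
    and dctx: "pser_ctx d T M"
  shows "pser c T (pser c T x) = pser d T x"
proof -
  define a where "a k = \<bar>c k\<bar> * M ^ k" for k
  have a0: "0 \<le> a k" for k by (simp add: a_def M)
  have sa: "summable (\<lambda>k. norm (a k))" using sc a0 by (simp add: a_def abs_mult M)
  define S1 where "S1 N = {..<N} \<times> {..<N::nat}" for N
  define S2 where "S2 N = {(i,j). i + j < (N::nat)}" for N
  have S21: "S2 N \<subseteq> S1 N" for N by (auto simp: S1_def S2_def)
  have fin1: "finite (S1 N)" for N by (simp add: S1_def)
  have fin2: "finite (S2 N)" for N using finite_subset[OF S21 fin1] .
  have lim1: "(\<lambda>N. \<Sum>(i,j)\<in>S1 N. a i * a j) \<longlonglongrightarrow> suminf a * suminf a"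
  proof -
    have "(\<lambda>N. (\<Sum>k<N. a k) * (\<Sum>k<N. a k)) \<longlonglongrightarrow> suminf a * suminf a"
      by (intro tendsto_intros summable_LIMSEQ summable_norm_cancel[OF sa])
    then show ?thesis by (simp add: S1_def sum_product sum.cartesian_product)
  qed
  have lim2: "(\<lambda>N. \<Sum>(i,j)\<in>S2 N. a i * a j) \<longlonglongrightarrow> suminf a * suminf a"
  proof -
    have "(\<lambda>k. \<Sum>i\<le>k. a i * a (k - i)) sums (suminf a * suminf a)"
      by (rule Cauchy_product_sums[OF sa sa])
    then have "(\<lambda>N. \<Sum>k<N. \<Sum>i\<le>k. a i * a (k - i)) \<longlonglongrightarrow> suminf a * suminf a"
      by (simp add: sums_def)
    then show ?thesis by (simp add: S2_def sum.triangle_reindex)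
  qed
  have diff0: "(\<lambda>N. (\<Sum>(i,j)\<in>S1 N. a i * a j) - (\<Sum>(i,j)\<in>S2 N. a i * a j)) \<longlonglongrightarrow> 0"
    using tendsto_diff[OF lim1 lim2] by simp
  define Er where "Er = (\<lambda>N::nat. PN N (PN N x) - (\<Sum>n<N. scaleR (d n) ((T ^^ n) x)))"
  have Er: "Er N = (\<Sum>(i,j)\<in>S1 N - S2 N. scaleR (c i * c j) ((T ^^ (i + j)) x))" for N
    unfolding Er_def PN_PN_expand QN_expand[OF d, where N=N and x=x] by (simp add: S1_def[symmetric] S2_def[symmetric] sum_diff[OF fin1 S21])
  have Ebound: "norm (Er N) \<le> ((\<Sum>(i,j)\<in>S1 N. a i * a j) - (\<Sum>(i,j)\<in>S2 N. a i * a j)) * norm x" for N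
  proof -
    have "norm (Er N) \<le> (\<Sum>(i,j)\<in>S1 N - S2 N. norm (scaleR (c i * c j) ((T ^^ (i + j)) x)))"
      unfolding Er by (rule norm_sum[THEN order_trans]) (simp add: case_prod_beta)
    also have "\<dots> \<le> (\<Sum>(i,j)\<in>S1 N - S2 N. a i * a j * norm x)"
    proof (rule sum_mono)
      fix p assume "p \<in> S1 N - S2 N"
      obtain i j where p: "p = (i, j)" by fastforce
      have "norm (scaleR (c i * c j) ((T ^^ (i + j)) x)) \<le> \<bar>c i * c j\<bar> * (M ^ (i + j) * norm x)"
        by (simp add: mult_left_mono powM)
      also have "\<dots> = a i * a j * norm x" by (simp add: a_def abs_mult power_add algebra_simps)
      finally show "(case p of (i, j) \<Rightarrow> norm (scaleR (c i * c j) ((T ^^ (i + j)) x)))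
          \<le> (case p of (i, j) \<Rightarrow> a i * a j * norm x)" by (simp add: p)
    qed
    also have "\<dots> = (\<Sum>(i,j)\<in>S1 N - S2 N. a i * a j) * norm x"
      by (simp add: sum_distrib_right case_prod_beta)
    also have "(\<Sum>(i,j)\<in>S1 N - S2 N. a i * a j) = (\<Sum>(i,j)\<in>S1 N. a i * a j) - (\<Sum>(i,j)\<in>S2 N. a i * a j)"
      by (rule sum_diff[OF fin1 S21])
    finally show ?thesis .
  qed
  have "(\<lambda>N. ((\<Sum>(i,j)\<in>S1 N. a i * a j) - (\<Sum>(i,j)\<in>S2 N. a i * a j)) * norm x) \<longlonglongrightarrow> 0 * norm x"
    by (intro tendsto_intros diff0)
  then have "Er \<longlonglongrightarrow> 0"
    by (intro null_comp[OF Ebound]) simp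
  moreover have "(\<lambda>N. \<Sum>n<N. scaleR (d n) ((T ^^ n) x)) \<longlonglongrightarrow> pser d T x"
    by (rule pser_ctx.partial_sums_tendsto[OF dctx])
  ultimately have "(\<lambda>N. Er N + (\<Sum>n<N. scaleR (d n) ((T ^^ n) x))) \<longlonglongrightarrow> 0 + pser d T x"
    by (rule tendsto_add)
  then have "(\<lambda>N. PN N (PN N x)) \<longlonglongrightarrow> pser d T x" by (simp add: Er_def)
  then show ?thesis using PN_PN_tendsto LIMSEQ_unique by blast
qed

end



section \<open>Positive square roots\<close>

definition dd :: "nat \<Rightarrow> real" where
  "dd n = (if n = 0 then 1 else if n = 1 then -1 else 0)"

lemma dd_support: "n \<notin> {0, 1} \<Longrightarrow> dd n = 0"
  by (simp add: dd_def)

definition sqT :: "('a::complex_hilbert_space \<Rightarrow> 'a) \<Rightarrow> real \<Rightarrow> 'a \<Rightarrow> 'a" where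
  "sqT P a x = x - scaleR (1 / a) (P x)"

definition sqrtc :: "('a::complex_hilbert_space \<Rightarrow> 'a) \<Rightarrow> real \<Rightarrow> 'a \<Rightarrow> 'a" where
  "sqrtc P a x = scaleR (sqrt a) (pser cc (sqT P a) x)"

locale sq_ctx =
  fixes P :: "'a::complex_hilbert_space \<Rightarrow> 'a" and a :: real
  assumes P: "pos_op P" and a: "0 < a" and Pa: "\<And>x. Re (cinner (P x) x) \<le> a * norm x ^ 2"
begin

abbreviation "T \<equiv> sqT P a"

lemma Pbcl: "bounded_clinear P" using P by (simp add: pos_op_def)

lemma T_bcl: "bounded_clinear T"
  unfolding sqT_def by (intro bounded_clinear_diff bounded_clinear_id bounded_clinear_scaleR Pbcl)

lemma T_lin: "lin T" by (rule bounded_clinear_lin[OF T_bcl])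

lemma T_selfadj: "selfadj T"
  using pos_op_selfadj[OF P]
  by (simp add: selfadj_def sqT_def cinner_diff_left cinner_diff_right cinner_scaleR_left cinner_scaleR_right)

lemma T_Re: "Re (cinner (T x) x) = norm x ^ 2 - Re (cinner (P x) x) / a"
  by (simp add: sqT_def cinner_diff_left cinner_scaleR_left cinner_self_Re)

lemma T_Re_bounds: "0 \<le> Re (cinner (T x) x)" "Re (cinner (T x) x) \<le> norm x ^ 2"
proof -
  have "Re (cinner (P x) x) / a \<le> norm x ^ 2" using Pa[of x] a by (simp add: divide_le_eq mult.commute)
  moreover have "0 \<le> Re (cinner (P x) x) / a" using pos_op_Re[OF P] a by simp
  ultimately show "0 \<le> Re (cinner (T x) x)" "Re (cinner (T x) x) \<le> norm x ^ 2" by (simp_all add: T_Re)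
qed

lemma T_norm: "norm (T x) \<le> 1 * norm x"
  by (rule selfadj_norm_bound[OF T_lin T_selfadj]) (use T_Re_bounds in auto)

lemma ctx_cc: "pser_ctx cc T 1"
  by unfold_locales (use T_bcl T_norm summable_abs_cc in auto)

lemma ctx_dd: "pser_ctx dd T 1"
proof
  show "summable (\<lambda>k. \<bar>dd k\<bar> * 1 ^ k)"
    by (rule summable_finite[of "{0,1}"]) (auto simp: dd_def)
qed (use T_bcl T_norm in auto)

lemma pser_dd: "pser dd T x = x - T x"
proof -
  have "pser dd T x = (\<Sum>k\<in>{0,1}. scaleR (dd k) ((T ^^ k) x))"
    unfolding pser_def by (rule suminf_finite) (auto simp: dd_def)
  then show ?thesis by (simp add: dd_def)
qed

abbreviation "R \<equiv> sqrtc P a"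

lemma R_bcl: "bounded_clinear R"
  unfolding sqrtc_def by (intro bounded_clinear_scaleR pser_ctx.pser_bcl[OF ctx_cc])

lemma R_selfadj: "selfadj R"
  using pser_ctx.pser_selfadj[OF ctx_cc T_selfadj]
  by (simp add: selfadj_def sqrtc_def cinner_scaleR_left cinner_scaleR_right)

lemma pser_nonneg: "0 \<le> Re (cinner (pser cc T x) x)"
proof -
  define r where "r k = Re (cinner ((T ^^ k) x) x)" for k
  have rb: "\<bar>r k\<bar> \<le> norm x ^ 2" for k
  proof -
    have "\<bar>r k\<bar> \<le> cmod (cinner ((T ^^ k) x) x)" by (simp add: r_def abs_Re_le_cmod)
    also have "\<dots> \<le> norm ((T ^^ k) x) * norm x" by (rule cauchy_schwarz)
    also have "\<dots> \<le> (1 ^ k * norm x) * norm x"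
      by (intro mult_right_mono pser_ctx.powM[OF ctx_cc]) simp
    finally show ?thesis by (simp add: power2_eq_square)
  qed
  have sum1: "summable (\<lambda>k. cc k * r k)"
    by (rule summable_comparison_test[OF _ summable_mult2[OF summable_abs_cc, of "norm x ^ 2"]])
       (auto intro!: exI[of _ 0] simp: abs_mult intro: mult_left_mono rb)
  have "Re (cinner (pser cc T x) x) = (\<Sum>k. cc k * r k)"
    unfolding r_def by (rule pser_ctx.pser_Re_cinner[OF ctx_cc])
  also have "\<dots> = (\<Sum>k. cc (Suc k) * r (Suc k)) + cc 0 * r 0"
    using suminf_split_head[OF sum1] by simp
  also have "cc 0 * r 0 = norm x ^ 2" by (simp add: cc_0 r_def cinner_self_Re)
  finally have e1: "Re (cinner (pser cc T x) x) = (\<Sum>k. cc (Suc k) * r (Suc k)) + norm x ^ 2" .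
  have e2: "(\<Sum>k. - (\<bar>cc (Suc k)\<bar> * norm x ^ 2)) \<le> (\<Sum>k. cc (Suc k) * r (Suc k))"
  proof (rule suminf_le)
    fix k
    have "\<bar>cc (Suc k) * r (Suc k)\<bar> \<le> \<bar>cc (Suc k)\<bar> * norm x ^ 2"
      unfolding abs_mult by (intro mult_left_mono rb) simp
    then show "- (\<bar>cc (Suc k)\<bar> * norm x ^ 2) \<le> cc (Suc k) * r (Suc k)" by (simp add: abs_le_iff)
    show "summable (\<lambda>k. - (\<bar>cc (Suc k)\<bar> * norm x ^ 2))"
      by (intro summable_minus summable_mult2 summable_abs_cc_Suc)
    show "summable (\<lambda>k. cc (Suc k) * r (Suc k))"
      using sum1 by (subst summable_Suc_iff)
  qed
  have e3: "(\<Sum>k. - (\<bar>cc (Suc k)\<bar> * norm x ^ 2)) = - ((\<Sum>k. \<bar>cc (Suc k)\<bar>) * norm x ^ 2)"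
    using suminf_minus[OF summable_mult2[OF summable_abs_cc_Suc, of "norm x ^ 2"]]
      suminf_mult2[OF summable_abs_cc_Suc, of "norm x ^ 2"] by simp
  have e4: "(\<Sum>k. \<bar>cc (Suc k)\<bar>) * norm x ^ 2 \<le> 1 * norm x ^ 2"
    by (intro mult_right_mono suminf_abs_cc_Suc) simp
  show ?thesis using e1 e2 e3 e4 by linarith
qed

lemma R_pos: "pos_op R"
  unfolding pos_op_def
proof (intro conjI allI R_bcl)
  fix x
  show "cinner (R x) x \<in> \<real>"
    using selfadj_real[OF R_selfadj, of x] by (simp add: complex_is_Real_iff)
  show "0 \<le> Re (cinner (R x) x)"
    using pser_nonneg[of x] a by (simp add: sqrtc_def cinner_scaleR_left)
qed

lemma R_sq: "R (R x) = P x"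
proof -
  have "R (R x) = scaleR (sqrt a) (scaleR (sqrt a) (pser cc T (pser cc T x)))"
    using bounded_clinear_lin[OF pser_ctx.pser_bcl[OF ctx_cc]]
    by (simp add: sqrtc_def lin_scaleR)
  also have "pser cc T (pser cc T x) = pser dd T x"
    by (rule pser_ctx.pser_square[OF ctx_cc _ ctx_dd]) (simp add: cc_cauchy dd_def)
  also have "\<dots> = scaleR (1 / a) (P x)" by (simp add: pser_dd sqT_def)
  finally show ?thesis using a by simp
qed

lemma R_comm:
  assumes S: "bounded_clinear S" and SP: "\<And>x. S (P x) = P (S x)"
  shows "S (R x) = R (S x)"
proof -
  have ST: "S (T x) = T (S x)" for x
    using bounded_clinear_lin[OF S] SP by (simp add: sqT_def lin_diff lin_scaleR)
  have "S (pser cc T x) = pser cc T (S x)" by (rule pser_ctx.pser_comm[OF ctx_cc S, where T'="sqT P a", OF ST])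
  then show ?thesis using bounded_clinear_lin[OF S] by (simp add: sqrtc_def lin_scaleR)
qed

lemma R_unique:
  assumes S: "pos_op S" and SS: "S \<circ> S = P"
  shows "S = R"
proof
  fix x
  have Sbcl: "bounded_clinear S" using S by (simp add: pos_op_def)
  have SSx: "S (S y) = P y" for y using SS by (metis comp_apply)
  have SP: "S (P y) = P (S y)" for y by (simp flip: SSx)
  have SR: "S (R y) = R (S y)" for y by (rule R_comm[OF Sbcl SP])
  have linR: "lin R" using bounded_clinear_lin[OF R_bcl] .
  have linS: "lin S" using bounded_clinear_lin[OF Sbcl] .
  define D where "D y = R y - S y" for y
  have zero: "R (D y) + S (D y) = 0" for y
    by (simp add: D_def lin_diff[OF linR] lin_diff[OF linS] R_sq SSx SR)
  have RD: "R (D y) = 0" and SD: "S (D y) = 0" for y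
  proof -
    have "Re (cinner (R (D y)) (D y)) + Re (cinner (S (D y)) (D y)) = Re (cinner (R (D y) + S (D y)) (D y))"
      by (simp add: cinner_add_left)
    also have "\<dots> = 0" by (simp add: zero)
    finally have e: "Re (cinner (R (D y)) (D y)) + Re (cinner (S (D y)) (D y)) = 0" .
    have "0 \<le> Re (cinner (R (D y)) (D y))" by (rule pos_op_Re[OF R_pos])
    moreover have "0 \<le> Re (cinner (S (D y)) (D y))" by (rule pos_op_Re[OF S])
    ultimately have "Re (cinner (R (D y)) (D y)) = 0" "Re (cinner (S (D y)) (D y)) = 0" using e by linarith+
    then show "R (D y) = 0" "S (D y) = 0" using pos_zero_form[OF R_pos] pos_zero_form[OF S] by blast+
  qed
  have DD: "D (D x) = 0" using RD[of x] SD[of x] by (simp add: D_def)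
  have "cinner (D x) (D x) = cinner (D (D x)) x"
    using R_selfadj pos_op_selfadj[OF S]
    by (simp add: D_def selfadj_def cinner_diff_left cinner_diff_right)
  then have "D x = 0" by (simp add: DD)
  then show "S x = R x" by (simp add: D_def)
qed

lemma sqrt_op_eq: "sqrt_op P = R"
  unfolding sqrt_op_def
proof (rule the_equality)
  show "pos_op R \<and> R \<circ> R = P" using R_pos R_sq by (auto simp: fun_eq_iff)
  fix S assume "pos_op S \<and> S \<circ> S = P"
  then show "S = R" using R_unique by blast
qed

end

section \<open>Absolute values\<close>

lemma adj_norm:
  assumes A: "bounded_clinear A"
  shows "norm (adj A y) \<le> onorm A * norm y"
proof -
  have "norm (adj A y) ^ 2 = Re (cinner (A (adj A y)) y)"
    by (simp add: adj_prop[OF A] flip: cinner_self_Re)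
  also have "\<dots> \<le> norm (A (adj A y)) * norm y" by (rule Re_cinner_le)
  also have "\<dots> \<le> onorm A * norm (adj A y) * norm y"
    by (intro mult_right_mono bounded_clinear_onorm[OF A]) simp
  finally have "norm (adj A y) * norm (adj A y) \<le> (onorm A * norm y) * norm (adj A y)"
    by (simp add: power2_eq_square algebra_simps)
  then show "norm (adj A y) \<le> onorm A * norm y"
    by (cases "adj A y = 0") (auto simp: bounded_clinear_onorm_nonneg[OF A] mult_le_cancel_right)
qed

lemma gram_pos:
  assumes A: "bounded_clinear A"
  shows "pos_op (adj A \<circ> A)" "Re (cinner (adj A (A x)) x) = norm (A x) ^ 2"
proof -
  have e: "cinner (adj A (A x)) x = complex_of_real (norm (A x) ^ 2)" for x
    by (simp add: adj_prop'[OF A] cinner_self)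
  show "Re (cinner (adj A (A x)) x) = norm (A x) ^ 2" by (simp add: e)
  show "pos_op (adj A \<circ> A)" unfolding pos_op_def
    by (auto simp: e bounded_clinear_comp adj_bounded_clinear A)
qed

definition absc where "absc A = onorm A ^ 2 + 1"

lemma absc_pos: "0 < absc A" by (simp add: absc_def add_nonneg_pos)

lemma sq_ctx_abs:
  assumes A: "bounded_clinear A"
  shows "sq_ctx (adj A \<circ> A) (absc A)"
proof
  show "pos_op (adj A \<circ> A)" by (rule gram_pos(1)[OF A])
  show "0 < absc A" by (rule absc_pos)
  fix x
  have "norm (A x) \<le> onorm A * norm x" by (rule bounded_clinear_onorm[OF A])
  then have "norm (A x) ^ 2 \<le> (onorm A * norm x) ^ 2" by (intro power_mono) auto
  also have "\<dots> \<le> absc A * norm x ^ 2" by (simp add: absc_def power_mult_distrib algebra_simps)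
  finally show "Re (cinner ((adj A \<circ> A) x) x) \<le> absc A * norm x ^ 2" by (simp add: gram_pos(2)[OF A])
qed

lemma sq_ctx_abs_adj:
  assumes A: "bounded_clinear A"
  shows "sq_ctx (adj (adj A) \<circ> adj A) (absc A)"
proof
  have A': "bounded_clinear (adj A)" by (rule adj_bounded_clinear[OF A])
  show "pos_op (adj (adj A) \<circ> adj A)" by (rule gram_pos(1)[OF A'])
  show "0 < absc A" by (rule absc_pos)
  fix x
  have "norm (adj A x) \<le> onorm A * norm x" by (rule adj_norm[OF A])
  then have "norm (adj A x) ^ 2 \<le> (onorm A * norm x) ^ 2" by (intro power_mono) auto
  also have "\<dots> \<le> absc A * norm x ^ 2" by (simp add: absc_def power_mult_distrib algebra_simps)
  finally show "Re (cinner ((adj (adj A) \<circ> adj A) x) x) \<le> absc A * norm x ^ 2" by (simp add: gram_pos(2)[OF A'])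
qed

lemma abs_op_eq: "bounded_clinear A \<Longrightarrow> abs_op A = sqrtc (adj A \<circ> A) (absc A)"
  unfolding abs_op_def by (rule sq_ctx.sqrt_op_eq[OF sq_ctx_abs])

lemma abs_op_adj_eq: "bounded_clinear A \<Longrightarrow> abs_op (adj A) = sqrtc (adj (adj A) \<circ> adj A) (absc A)"
  unfolding abs_op_def by (rule sq_ctx.sqrt_op_eq[OF sq_ctx_abs_adj])

lemma abs_op_pos: "bounded_clinear A \<Longrightarrow> pos_op (abs_op A)"
  by (simp add: abs_op_eq sq_ctx.R_pos[OF sq_ctx_abs])

lemma abs_op_adj_pos: "bounded_clinear A \<Longrightarrow> pos_op (abs_op (adj A))"
  by (simp add: abs_op_adj_eq sq_ctx.R_pos[OF sq_ctx_abs_adj])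

lemma abs_op_sq: "bounded_clinear A \<Longrightarrow> abs_op A (abs_op A x) = adj A (A x)"
  by (simp add: abs_op_eq sq_ctx.R_sq[OF sq_ctx_abs])

lemma abs_op_adj_sq: "bounded_clinear A \<Longrightarrow> abs_op (adj A) (abs_op (adj A) x) = A (adj A x)"
proof -
  assume A: "bounded_clinear A"
  show ?thesis using sq_ctx.R_sq[OF sq_ctx_abs_adj[OF A], of x]
    by (simp add: abs_op_adj_eq[OF A] adj_adj[OF A])
qed

lemma abs_intertwine:
  assumes A: "bounded_clinear A"
  shows "A (abs_op A x) = abs_op (adj A) (A x)"
proof -
  have AT: "A (sqT (adj A \<circ> A) (absc A) y) = sqT (adj (adj A) \<circ> adj A) (absc A) (A y)" for y
    using bounded_clinear_lin[OF A] by (simp add: sqT_def lin_diff lin_scaleR adj_adj[OF A])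
  have "A (pser cc (sqT (adj A \<circ> A) (absc A)) x) = pser cc (sqT (adj (adj A) \<circ> adj A) (absc A)) (A x)"
    by (rule pser_ctx.pser_comm[OF sq_ctx.ctx_cc[OF sq_ctx_abs[OF A]] A,
          where T'="sqT (adj (adj A) \<circ> adj A) (absc A)", OF AT])
  then show ?thesis
    using bounded_clinear_lin[OF A] by (simp add: abs_op_eq[OF A] abs_op_adj_eq[OF A] sqrtc_def lin_scaleR)
qed



section \<open>P-boundedness of P-symmetric operators\<close>

definition qf :: "('a::complex_hilbert_space \<Rightarrow> 'a) \<Rightarrow> 'a \<Rightarrow> real" where
  "qf P x = Re (cinner (P x) x)"

definition psym :: "('a::complex_hilbert_space \<Rightarrow> 'a) \<Rightarrow> ('a \<Rightarrow> 'a) \<Rightarrow> bool" where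
  "psym P S \<longleftrightarrow> (\<forall>u v. cinner (P (S u)) v = cinner u (P (S v)))"

lemma qf_nonneg: "pos_op P \<Longrightarrow> 0 \<le> qf P x"
  by (simp add: qf_def pos_op_Re)

lemma qf_le: "pos_op P \<Longrightarrow> qf P y \<le> onorm P * norm y ^ 2"
proof -
  assume P: "pos_op P"
  have "qf P y \<le> norm (P y) * norm y" unfolding qf_def by (rule Re_cinner_le)
  also have "\<dots> \<le> (onorm P * norm y) * norm y"
    by (intro mult_right_mono bounded_clinear_onorm) (use P in \<open>auto simp: pos_op_def\<close>)
  finally show ?thesis by (simp add: power2_eq_square mult.assoc)
qed

lemma psym_pow:
  assumes P: "pos_op P" and PS: "psym P S"
  shows "psym P (S ^^ k)"
  unfolding psym_def
proof (induction k)
  case 0 then show ?case using pos_op_selfadj[OF P] by (simp add: selfadj_def)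
next
  case (Suc k)
  show ?case
  proof (intro allI)
    fix u v
    have "cinner (P ((S ^^ Suc k) u)) v = cinner (P (S ((S ^^ k) u))) v" by simp
    also have "\<dots> = cinner ((S ^^ k) u) (P (S v))" using PS by (simp add: psym_def)
    also have "\<dots> = cinner (P ((S ^^ k) u)) (S v)" using pos_op_selfadj[OF P] by (simp add: selfadj_def)
    also have "\<dots> = cinner u (P ((S ^^ k) (S v)))" using Suc by simp
    also have "(S ^^ k) (S v) = (S ^^ Suc k) v" by (simp add: funpow_swap1)
    finally show "cinner (P ((S ^^ Suc k) u)) v = cinner u (P ((S ^^ Suc k) v))" .
  qed
qed

lemma qf_step:
  assumes P: "pos_op P" and PS: "psym P S"
  shows "qf P (S x) ^ 2 \<le> qf P (S (S x)) * qf P x"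
proof -
  have "cinner (P (S x)) (S x) = cinner x (P (S (S x)))" using PS by (simp add: psym_def)
  also have "\<dots> = cnj (cinner (P (S (S x))) x)" by (rule cinner_commute)
  finally have e: "cmod (cinner (P (S x)) (S x)) = cmod (cinner (P (S (S x))) x)" by simp
  have "qf P (S x) \<le> cmod (cinner (P (S x)) (S x))" unfolding qf_def by (rule complex_Re_le_cmod)
  also have "\<dots> \<le> sqrt (qf P (S (S x)) * qf P x)" unfolding e qf_def by (rule pos_cs[OF P])
  finally have "qf P (S x) \<le> sqrt (qf P (S (S x)) * qf P x)" .
  then have "qf P (S x) ^ 2 \<le> (sqrt (qf P (S (S x)) * qf P x)) ^ 2"
    using qf_nonneg[OF P] by (intro power_mono) auto
  also have "\<dots> = qf P (S (S x)) * qf P x" using qf_nonneg[OF P] by simp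
  finally show ?thesis .
qed

lemma qf_iter:
  assumes P: "pos_op P" and PS: "psym P S"
  shows "qf P (S x) ^ (2 ^ n) \<le> qf P ((S ^^ (2 ^ n)) x) * qf P x ^ (2 ^ n - 1)"
proof (induction n)
  case 0 then show ?case by simp
next
  case (Suc n)
  define m :: nat where "m = 2 ^ n"
  have m1: "m \<ge> 1" by (simp add: m_def)
  have IH: "qf P (S x) ^ m \<le> qf P ((S ^^ m) x) * qf P x ^ (m - 1)" using Suc by (simp add: m_def)
  have "qf P (S x) ^ (2 ^ Suc n) = (qf P (S x) ^ m) ^ 2" by (simp add: m_def power_mult[symmetric] mult.commute)
  also have "\<dots> \<le> (qf P ((S ^^ m) x) * qf P x ^ (m - 1)) ^ 2"
    using IH qf_nonneg[OF P] by (intro power_mono) auto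
  also have "\<dots> = qf P ((S ^^ m) x) ^ 2 * qf P x ^ (2 * (m - 1))"
    by (simp add: power_mult_distrib power_mult[symmetric] mult.commute)
  also have "\<dots> \<le> (qf P ((S ^^ m) ((S ^^ m) x)) * qf P x) * qf P x ^ (2 * (m - 1))"
    by (intro mult_right_mono qf_step[OF P psym_pow[OF P PS]]) (simp add: qf_nonneg[OF P])
  also have "(S ^^ m) ((S ^^ m) x) = (S ^^ (m + m)) x" by (rule pow_add_apply[symmetric])
  also have "m + m = 2 ^ Suc n" by (simp add: m_def)
  also have "qf P ((S ^^ (2 ^ Suc n)) x) * qf P x * qf P x ^ (2 * (m - 1)) =
      qf P ((S ^^ (2 ^ Suc n)) x) * qf P x ^ (2 ^ Suc n - 1)"
  proof -
    have a1: "1 + 2 * (m - 1) = 2 * m - 1" using m1 by arith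
    have a2: "2 * m = 2 ^ Suc n" by (simp add: m_def)
    have "1 + 2 * (m - 1) = 2 ^ Suc n - 1" using a1 a2 by simp
    then show ?thesis by (metis mult.assoc power_add power_one_right)
  qed
  finally show ?case .
qed

lemma pbound:
  assumes P: "pos_op P" and S: "bounded_clinear S" and PS: "psym P S"
  shows "qf P (S x) \<le> onorm S ^ 2 * qf P x"
proof (rule ccontr)
  define K where "K = onorm S"
  define A where "A = qf P (S x)"
  define Q where "Q = qf P x"
  define C0 where "C0 = onorm P * norm x ^ 2"
  have K0: "0 \<le> K" unfolding K_def by (rule bounded_clinear_onorm_nonneg[OF S])
  have Q0: "0 \<le> Q" unfolding Q_def by (rule qf_nonneg[OF P])
  have C00: "0 \<le> C0" unfolding C0_def using P by (simp add: pos_op_def bounded_clinear_onorm_nonneg)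
  assume "\<not> qf P (S x) \<le> onorm S ^ 2 * qf P x"
  then have AK: "A > K ^ 2 * Q" by (simp add: A_def K_def Q_def)
  have A0: "A > 0" using AK K0 Q0 by (meson mult_nonneg_nonneg order_le_less_trans zero_le_power2)
  have main: "A ^ (2 ^ n) \<le> C0 * (K ^ 2) ^ (2 ^ n) * Q ^ (2 ^ n - 1)" for n
  proof -
    have "qf P ((S ^^ (2 ^ n)) x) \<le> onorm P * norm ((S ^^ (2 ^ n)) x) ^ 2" by (rule qf_le[OF P])
    also have "\<dots> \<le> onorm P * (K ^ (2 ^ n) * norm x) ^ 2"
      using P by (intro mult_left_mono power_mono pow_norm)
        (use bounded_clinear_onorm[OF S] bounded_clinear_onorm_nonneg[OF S] in
          \<open>auto simp: K_def K0 pos_op_def bounded_clinear_onorm_nonneg\<close>)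
    also have "\<dots> = C0 * (K ^ 2) ^ (2 ^ n)"
      by (simp add: C0_def power_mult_distrib power_mult[symmetric] mult.commute mult.left_commute)
    finally have "qf P ((S ^^ (2 ^ n)) x) \<le> C0 * (K ^ 2) ^ (2 ^ n)" .
    then have "qf P ((S ^^ (2 ^ n)) x) * Q ^ (2 ^ n - 1) \<le> C0 * (K ^ 2) ^ (2 ^ n) * Q ^ (2 ^ n - 1)"
      using Q0 by (intro mult_right_mono) auto
    then show ?thesis using qf_iter[OF P PS, of x n] by (simp add: A_def Q_def)
  qed
  show False
  proof (cases "Q = 0 \<or> K = 0")
    case True
    have "A ^ 2 \<le> C0 * (K ^ 2) ^ 2 * Q ^ 1" using main[of 1] by simp
    then have "A ^ 2 \<le> 0" using True by auto
    then show False using A0 by (simp add: power2_eq_square mult_le_0_iff)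
  next
    case False
    then have Qp: "Q > 0" and Kp: "K > 0" using Q0 K0 by auto
    define \<rho> where "\<rho> = A / (K ^ 2 * Q)"
    have rho1: "\<rho> > 1" using AK Qp Kp by (simp add: \<rho>_def)
    have Aeq: "A = \<rho> * K ^ 2 * Q" using Qp Kp by (simp add: \<rho>_def)
    obtain n where n: "C0 / Q < \<rho> ^ n" using real_arch_pow[OF rho1] by blast
    have "\<rho> ^ n \<le> \<rho> ^ (2 ^ n)" using rho1 by (intro power_increasing) (auto intro: less_imp_le[OF less_exp])
    have "\<rho> ^ (2 ^ n) * (K ^ 2) ^ (2 ^ n) * Q ^ (2 ^ n - 1) * Q = A ^ (2 ^ n)"
    proof -
      have "Q ^ (2 ^ n - 1) * Q = Q ^ (2 ^ n)" by (simp add: power_Suc2[symmetric])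
      then show ?thesis by (simp add: Aeq power_mult_distrib mult.assoc)
    qed
    also have "\<dots> \<le> C0 * (K ^ 2) ^ (2 ^ n) * Q ^ (2 ^ n - 1)" by (rule main)
    finally have "\<rho> ^ (2 ^ n) * Q * ((K ^ 2) ^ (2 ^ n) * Q ^ (2 ^ n - 1)) \<le> C0 * ((K ^ 2) ^ (2 ^ n) * Q ^ (2 ^ n - 1))"
      by (simp add: algebra_simps)
    moreover have "0 < (K ^ 2) ^ (2 ^ n) * Q ^ (2 ^ n - 1)" using Kp Qp by simp
    ultimately have "\<rho> ^ (2 ^ n) * Q \<le> C0" by (simp add: mult_le_cancel_right)
    then have "\<rho> ^ (2 ^ n) \<le> C0 / Q" using Qp by (simp add: le_divide_eq)
    then show False using n \<open>\<rho> ^ n \<le> \<rho> ^ (2 ^ n)\<close> by linarith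
  qed
qed



section \<open>Numerical range with respect to P and the spectral radius\<close>

lemma psym_real: "psym P B \<Longrightarrow> cinner (P (B x)) x = complex_of_real (Re (cinner (P (B x)) x))"
proof -
  assume "psym P B"
  then have "cinner (P (B x)) x = cinner x (P (B x))" by (simp add: psym_def)
  also have "\<dots> = cnj (cinner (P (B x)) x)" by (rule cinner_commute)
  finally have "Im (cinner (P (B x)) x) = 0" by (metis cnj.sel(2) neg_equal_zero)
  then show ?thesis by (simp add: complex_eq_iff)
qed

lemma gbound:
  assumes P: "pos_op P" and B: "bounded_clinear B" and PB: "psym P B"
  shows "cmod (cinner (P (B x)) x) \<le> onorm B * qf P x"
proof -
  have "cmod (cinner (P (B x)) x) \<le> sqrt (qf P (B x) * qf P x)" unfolding qf_def by (rule pos_cs[OF P])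
  also have "\<dots> \<le> sqrt ((onorm B ^ 2 * qf P x) * qf P x)"
    by (intro real_sqrt_le_mono mult_right_mono pbound[OF P B PB] qf_nonneg[OF P])
  also have "\<dots> = onorm B * qf P x"
    using qf_nonneg[OF P, of x] bounded_clinear_onorm_nonneg[OF B]
    by (simp add: real_sqrt_mult power2_eq_square)
  finally show ?thesis .
qed

lemma qf_scale: "lin P \<Longrightarrow> qf P (scaleR r x) = r ^ 2 * qf P x"
  by (simp add: qf_def lin_scaleR cinner_scaleR_left cinner_scaleR_right power2_eq_square)

lemma g_scale: "lin P \<Longrightarrow> lin B \<Longrightarrow>
    Re (cinner (P (B (scaleR r x))) (scaleR r x)) = r ^ 2 * Re (cinner (P (B x)) x)"
  by (simp add: lin_scaleR cinner_scaleR_left cinner_scaleR_right power2_eq_square)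

locale prange =
  fixes P B :: "'a::complex_hilbert_space \<Rightarrow> 'a"
  assumes P: "pos_op P" and B: "bounded_clinear B" and PB: "psym P B"
begin

definition W where "W = {Re (cinner (P (B x)) x) | x. qf P x = 1}"

lemma linP: "lin P" using P by (rule pos_op_lin)
lemma linB: "lin B" using B by (rule bounded_clinear_lin)

lemma W_bdd: "bdd_above W"
proof (rule bdd_aboveI[of _ "onorm B"])
  fix w assume "w \<in> W"
  then obtain x where x: "w = Re (cinner (P (B x)) x)" "qf P x = 1" by (auto simp: W_def)
  have "w \<le> cmod (cinner (P (B x)) x)" using x by (simp add: complex_Re_le_cmod)
  also have "\<dots> \<le> onorm B * qf P x" by (rule gbound[OF P B PB])
  finally show "w \<le> onorm B" using x by simp
qed

lemma normalize:
  assumes "qf P x > 0"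
  shows "qf P (scaleR (1 / sqrt (qf P x)) x) = 1"
    "Re (cinner (P (B (scaleR (1 / sqrt (qf P x)) x))) (scaleR (1 / sqrt (qf P x)) x)) =
       Re (cinner (P (B x)) x) / qf P x"
  using assms by (simp_all add: qf_scale[OF linP] g_scale[OF linP linB] power_divide)

lemma g_le:
  assumes ne: "W \<noteq> {}"
  shows "Re (cinner (P (B x)) x) \<le> Sup W * qf P x"
proof (cases "qf P x > 0")
  case True
  let ?y = "scaleR (1 / sqrt (qf P x)) x"
  have "Re (cinner (P (B ?y)) ?y) \<in> W" unfolding W_def using normalize(1)[OF True] by blast
  then have "Re (cinner (P (B ?y)) ?y) \<le> Sup W" by (rule cSup_upper[OF _ W_bdd])
  then have "Re (cinner (P (B x)) x) / qf P x \<le> Sup W" using normalize[OF True] by simp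
  then show ?thesis using True by (simp add: divide_le_eq)
next
  case False
  then have q0: "qf P x = 0" using qf_nonneg[OF P, of x] by simp
  have "Re (cinner (P (B x)) x) \<le> cmod (cinner (P (B x)) x)" by (rule complex_Re_le_cmod)
  also have "\<dots> \<le> onorm B * qf P x" by (rule gbound[OF P B PB])
  finally show ?thesis using q0 by simp
qed

lemma sup_in_spectrum:
  assumes ne: "W \<noteq> {}"
  shows "complex_of_real (Sup W) \<in> spectrum_op B"
proof (rule ccontr)
  define s where "s = Sup W"
  assume "complex_of_real (Sup W) \<notin> spectrum_op B"
  then obtain S where S: "bounded_clinear S"
      "S \<circ> (\<lambda>x. B x - scaleC (complex_of_real s) x) = id"
      "(\<lambda>x. B x - scaleC (complex_of_real s) x) \<circ> S = id"
    unfolding spectrum_op_def s_def by blast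
  have linS: "lin S" by (rule bounded_clinear_lin[OF S(1)])
  define T where "T x = scaleC (complex_of_real s) x - B x" for x
  define Ti where "Ti x = - S x" for x
  have linT: "lin T" unfolding T_def lin_def
    using linB by (simp add: linD_add linD_scaleC scaleC_add_right scaleC_diff_right scaleC_scaleC mult.commute)
  have TTi: "T (Ti y) = y" for y
  proof -
    have "B (S y) - scaleC (complex_of_real s) (S y) = y" using S(3) by (metis comp_apply id_apply)
    then show ?thesis using linB by (simp add: T_def Ti_def lin_minus scaleC_minus_right)
  qed
  have TiT: "Ti (T y) = y" for y
  proof -
    have "S (B y - scaleC (complex_of_real s) y) = y" using S(2) by (metis comp_apply id_apply)
    then show ?thesis using linS by (simp add: T_def Ti_def lin_diff[symmetric] lin_minus[symmetric])
  qed
  have Tibcl: "bounded_clinear Ti"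
    unfolding Ti_def using bounded_clinear_scaleR[OF S(1), of "-1"] by simp
  define Q where "Q x = P (T x)" for x
  have linQ: "lin Q" unfolding Q_def using linP linT by (simp add: lin_def)
  have selfP: "selfadj P" using pos_op_selfadj[OF P] .
  have selfQ: "selfadj Q" unfolding selfadj_def
  proof (intro allI)
    fix u v
    have "cinner (Q u) v = complex_of_real s * cinner (P u) v - cinner (P (B u)) v"
      using linP by (simp add: Q_def T_def lin_diff linD_scaleC cinner_diff_left cinner_scaleC_left)
    also have "\<dots> = complex_of_real s * cinner u (P v) - cinner u (P (B v))"
      using selfP PB by (simp add: selfadj_def psym_def)
    also have "\<dots> = cinner u (Q v)"
      using linP by (simp add: Q_def T_def lin_diff linD_scaleC cinner_diff_right cinner_scaleC_right)
    finally show "cinner (Q u) v = cinner u (Q v)" .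
  qed
  have ReQ: "Re (cinner (Q x) x) = s * qf P x - Re (cinner (P (B x)) x)" for x
    using linP by (simp add: Q_def T_def lin_diff linD_scaleC cinner_diff_left cinner_scaleC_left qf_def)
  have Qpos: "0 \<le> Re (cinner (Q x) x)" for x
    using g_le[OF ne, of x] by (simp add: ReQ s_def)
  have Qcs: "cmod (cinner (Q u) v) \<le> sqrt (Re (cinner (Q u) u) * Re (cinner (Q v) v))" for u v
  proof -
    have "cmod (cinner (Q u) v) \<le> 1 * sqrt (Re (cinner (Q u) u) * Re (cinner (Q v) v))"
      by (rule herm_bound[OF linQ selfQ linQ selfQ Qpos]) (auto simp: Qpos)
    then show ?thesis by simp
  qed
  have psymTi: "psym P Ti" unfolding psym_def
  proof (intro allI)
    fix u v
    have "cinner (Q (Ti u)) (Ti v) = cinner (Ti u) (Q (Ti v))" using selfQ by (simp add: selfadj_def)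
    then have e: "cinner (P u) (Ti v) = cinner (Ti u) (P v)" by (simp add: Q_def TTi)
    have "cinner (P (Ti u)) v = cinner (Ti u) (P v)" using selfP by (simp add: selfadj_def)
    also have "\<dots> = cinner (P u) (Ti v)" using e by simp
    also have "\<dots> = cinner u (P (Ti v))" using selfP by (simp add: selfadj_def)
    finally show "cinner (P (Ti u)) v = cinner u (P (Ti v))" .
  qed
  define K where "K = onorm Ti"
  have K0: "0 \<le> K" unfolding K_def by (rule bounded_clinear_onorm_nonneg[OF Tibcl])
  have gap: "1 \<le> K * (s - Re (cinner (P (B x)) x))" if x: "qf P x = 1" for x
  proof -
    have a: "Re (cinner (Q (Ti x)) (Ti x)) \<le> K"
    proof -
      have "Re (cinner (Q (Ti x)) (Ti x)) = Re (cinner (P x) (Ti x))" by (simp add: Q_def TTi)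
      also have "\<dots> \<le> cmod (cinner (P x) (Ti x))" by (rule complex_Re_le_cmod)
      also have "\<dots> \<le> sqrt (qf P x * qf P (Ti x))" unfolding qf_def by (rule pos_cs[OF P])
      also have "\<dots> \<le> sqrt (qf P x * (K ^ 2 * qf P x))"
        by (intro real_sqrt_le_mono mult_left_mono)
           (use pbound[OF P Tibcl psymTi] qf_nonneg[OF P] in \<open>auto simp: K_def\<close>)
      also have "\<dots> = K" using x K0 by simp
      finally show ?thesis .
    qed
    have "1 = Re (cinner (Q (Ti x)) x)" using x by (simp add: Q_def TTi qf_def)
    also have "\<dots> \<le> cmod (cinner (Q (Ti x)) x)" by (rule complex_Re_le_cmod)
    also have "\<dots> \<le> sqrt (Re (cinner (Q (Ti x)) (Ti x)) * Re (cinner (Q x) x))" by (rule Qcs)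
    also have "\<dots> \<le> sqrt (K * Re (cinner (Q x) x))"
      by (intro real_sqrt_le_mono mult_right_mono a Qpos)
    finally have "1 \<le> sqrt (K * Re (cinner (Q x) x))" .
    then have "1 \<le> K * Re (cinner (Q x) x)" using real_sqrt_le_mono[of "K * Re (cinner (Q x) x)" 1] by (metis real_sqrt_le_1_iff real_sqrt_one not_le real_sqrt_less_mono order_le_less_trans less_irrefl)
    then show ?thesis using x by (simp add: ReQ)
  qed
  obtain x0 where "qf P x0 = 1" using ne by (auto simp: W_def)
  then have "1 \<le> K * (s - Re (cinner (P (B x0)) x0))" by (rule gap)
  then have Kp: "K > 0" using K0 by (cases "K = 0") auto
  have "Sup W \<le> s - 1 / K"
  proof (rule cSup_least[OF ne])
    fix w assume "w \<in> W"
    then obtain x where x: "w = Re (cinner (P (B x)) x)" "qf P x = 1" by (auto simp: W_def)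
    have "1 \<le> K * (s - w)" using gap[OF x(2)] x(1) by simp
    then show "w \<le> s - 1 / K" using Kp by (simp add: field_simps)
  qed
  then show False using Kp by (simp add: s_def)
qed

end

lemma spectrum_neg: "bounded_clinear B \<Longrightarrow> z \<in> spectrum_op (\<lambda>x. - B x) \<Longrightarrow> - z \<in> spectrum_op B"
proof (rule ccontr)
  assume B: "bounded_clinear B" and z: "z \<in> spectrum_op (\<lambda>x. - B x)" and nz: "- z \<notin> spectrum_op B"
  then obtain S where S: "bounded_clinear S"
      "S \<circ> (\<lambda>x. B x - scaleC (- z) x) = id" "(\<lambda>x. B x - scaleC (- z) x) \<circ> S = id"
    unfolding spectrum_op_def by blast
  have linS: "lin S" by (rule bounded_clinear_lin[OF S(1)])
  have linB: "lin B" by (rule bounded_clinear_lin[OF B])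
  define S' where "S' x = - S x" for x
  have "bounded_clinear S'" unfolding S'_def using bounded_clinear_scaleR[OF S(1), of "-1"] by simp
  moreover have "S' \<circ> (\<lambda>x. - B x - scaleC z x) = id"
  proof
    fix y
    have "S (B y - scaleC (- z) y) = y" using S(2) by (metis comp_apply id_apply)
    then show "(S' \<circ> (\<lambda>x. - B x - scaleC z x)) y = id y"
      using linS by (simp add: S'_def scaleC_minus_left lin_minus[symmetric] algebra_simps)
  qed
  moreover have "(\<lambda>x. - B x - scaleC z x) \<circ> S' = id"
  proof
    fix y
    have "B (S y) - scaleC (- z) (S y) = y" using S(3) by (metis comp_apply id_apply)
    then show "((\<lambda>x. - B x - scaleC z x) \<circ> S') y = id y"
      using linB by (simp add: S'_def scaleC_minus_left scaleC_minus_right lin_minus algebra_simps)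
  qed
  ultimately show False using z unfolding spectrum_op_def by blast
qed

lemma prange_spec:
  assumes P: "pos_op P" and B: "bounded_clinear B" and PB: "psym P B"
  shows "cmod (cinner (P (B x)) x) \<le> specrad B * qf P x"
proof -
  have Bn: "bounded_clinear (\<lambda>x. - B x)" using bounded_clinear_scaleR[OF B, of "-1"] by simp
  have PBn: "psym P (\<lambda>x. - B x)"
    using PB pos_op_lin[OF P] by (simp add: psym_def lin_minus cinner_minus_left cinner_minus_right)
  interpret p1: prange P B by unfold_locales (rule P, rule B, rule PB)
  interpret p2: prange P "\<lambda>x. - B x" by unfold_locales (rule P, rule Bn, rule PBn)
  have r0: "0 \<le> specrad B" by (rule specrad_nonneg[OF B])
  show ?thesis
  proof (cases "p1.W = {}")
    case True
    then have q0: "qf P y = 0" for y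
    proof -
      have "\<not> qf P y > 0"
      proof
        assume "qf P y > 0"
        then have "Re (cinner (P (B (scaleR (1 / sqrt (qf P y)) y))) (scaleR (1 / sqrt (qf P y)) y)) \<in> p1.W"
          unfolding p1.W_def using p1.normalize(1) by blast
        then show False using True by simp
      qed
      then show ?thesis using qf_nonneg[OF P, of y] by simp
    qed
    have "cmod (cinner (P (B x)) x) \<le> onorm B * qf P x" by (rule gbound[OF P B PB])
    then show ?thesis using q0[of x] by simp
  next
    case False
    have ne2: "p2.W \<noteq> {}" using False by (auto simp: p1.W_def p2.W_def)
    have s1: "Sup p1.W \<le> specrad B"
      using specrad_ge[OF B p1.sup_in_spectrum[OF False]] by simp
    have s2: "Sup p2.W \<le> specrad B"
      using specrad_ge[OF B spectrum_neg[OF B p2.sup_in_spectrum[OF ne2]]] by simp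
    have u1: "Re (cinner (P (B x)) x) \<le> specrad B * qf P x"
      using p1.g_le[OF False, of x] s1 qf_nonneg[OF P, of x] by (meson mult_right_mono order_trans)
    have u2: "- Re (cinner (P (B x)) x) \<le> specrad B * qf P x"
      using p2.g_le[OF ne2, of x] s2 qf_nonneg[OF P, of x] pos_op_lin[OF P]
      by (simp add: lin_minus cinner_minus_left) (meson mult_right_mono order_trans)
    have "cmod (cinner (P (B x)) x) = \<bar>Re (cinner (P (B x)) x)\<bar>"
      by (subst psym_real[OF PB]) simp
    then show ?thesis using u1 u2 by simp
  qed
qed



lemma min_orth:
  fixes x0 k :: "'a::complex_hilbert_space"
  assumes H: "\<And>t. norm x0 \<le> norm (x0 + scaleC t k)"
  shows "cinner x0 k = 0"
proof -
  define w where "w = cmod (cinner x0 k) ^ 2"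
  have H2: "2 * s * w \<le> s ^ 2 * w * norm k ^ 2" if s: "s > 0" for s
  proof -
    define t where "t = - (complex_of_real s * cinner x0 k)"
    have "norm x0 ^ 2 \<le> norm (x0 + scaleC t k) ^ 2" using H[of t] by (simp add: power_mono)
    also have "\<dots> = norm x0 ^ 2 + norm (scaleC t k) ^ 2 + 2 * Re (cinner x0 (scaleC t k))"
      by (rule norm_add_sq)
    also have "cinner x0 (scaleC t k) = - complex_of_real s * (cinner x0 k * cnj (cinner x0 k))"
      by (simp add: t_def cinner_scaleC_right mult.commute)
    also have "cinner x0 k * cnj (cinner x0 k) = complex_of_real w"
      unfolding w_def by (rule complex_norm_square[symmetric])
    also have "norm (scaleC t k) ^ 2 = s ^ 2 * w * norm k ^ 2"
      using s by (simp add: norm_scaleC t_def w_def power_mult_distrib norm_mult)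
    finally show ?thesis by (simp add: algebra_simps)
  qed
  have "w = 0" by (rule small_quadratic[of w "norm k ^ 2", OF _ _ H2]) (auto simp: w_def)
  then show ?thesis by (simp add: w_def)
qed

locale main_ctx =
  fixes A B :: "'a::complex_hilbert_space \<Rightarrow> 'a"
  assumes A: "bounded_clinear A" and B: "bounded_clinear B"
    and H: "abs_op A \<circ> B = adj B \<circ> abs_op A"
begin

abbreviation "Q \<equiv> abs_op A"
abbreviation "Q' \<equiv> abs_op (adj A)"

lemma Qpos: "pos_op Q" by (rule abs_op_pos[OF A])
lemma Q'pos: "pos_op Q'" by (rule abs_op_adj_pos[OF A])
lemma Qsa: "selfadj Q" by (rule pos_op_selfadj[OF Qpos])
lemma Q'sa: "selfadj Q'" by (rule pos_op_selfadj[OF Q'pos])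
lemma Q'bcl: "bounded_clinear Q'" using Q'pos by (simp add: pos_op_def)
lemma linQ': "lin Q'" by (rule pos_op_lin[OF Q'pos])
lemma linQ: "lin Q" by (rule pos_op_lin[OF Qpos])

lemma QB: "Q (B x) = adj B (Q x)"
  using H by (metis comp_apply)

lemma psymQB: "psym Q B"
  unfolding psym_def
proof (intro allI)
  fix u v
  have "cinner (Q (B u)) v = cinner (adj B (Q u)) v" by (simp add: QB)
  also have "\<dots> = cinner (Q u) (B v)" by (rule adj_prop'[OF B])
  also have "\<dots> = cinner u (Q (B v))" using Qsa by (simp add: selfadj_def)
  finally show "cinner (Q (B u)) v = cinner u (Q (B v))" .
qed

abbreviation "r \<equiv> specrad B"

lemma form_bound: "cmod (cinner (Q (B u)) v) \<le> r * sqrt (qf Q u * qf Q v)"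
proof -
  have lin: "lin (\<lambda>x. Q (B x))" using linQ bounded_clinear_lin[OF B] by (simp add: lin_def)
  have sa: "selfadj (\<lambda>x. Q (B x))" using psymQB by (simp add: psym_def selfadj_def)
  have "cmod (cinner (Q (B u)) v) \<le> r * sqrt (Re (cinner (Q u) u) * Re (cinner (Q v) v))"
  proof (rule herm_bound[OF lin sa linQ Qsa pos_op_Re[OF Qpos] specrad_nonneg[OF B]])
    fix w
    have "\<bar>Re (cinner (Q (B w)) w)\<bar> \<le> cmod (cinner (Q (B w)) w)" by (rule abs_Re_le_cmod)
    also have "\<dots> \<le> r * qf Q w" by (rule prange_spec[OF Qpos B psymQB])
    finally show "\<bar>Re (cinner (Q (B w)) w)\<bar> \<le> r * Re (cinner (Q w) w)" by (simp add: qf_def)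
  qed
  then show ?thesis by (simp add: qf_def)
qed

lemma range_bound: "cmod (cinner (A (B x)) (Q' z)) \<le> r * sqrt (qf Q x * qf Q' (Q' z))"
proof -
  have "cinner (A (B x)) (Q' z) = cinner (Q' (A (B x))) z" using Q'sa by (simp add: selfadj_def)
  also have "\<dots> = cinner (A (Q (B x))) z" by (simp add: abs_intertwine[OF A])
  also have "\<dots> = cinner (Q (B x)) (adj A z)" by (rule adj_prop[OF A])
  finally have e1: "cinner (A (B x)) (Q' z) = cinner (Q (B x)) (adj A z)" .
  have "qf Q (adj A z) = Re (cinner (A (Q (adj A z))) z)" by (simp add: qf_def adj_prop[OF A])
  also have "A (Q (adj A z)) = Q' (A (adj A z))" by (rule abs_intertwine[OF A])
  also have "A (adj A z) = Q' (Q' z)" by (simp add: abs_op_adj_sq[OF A])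
  also have "Re (cinner (Q' (Q' (Q' z))) z) = qf Q' (Q' z)"
    using Q'sa by (simp add: qf_def selfadj_def)
  finally have e2: "qf Q (adj A z) = qf Q' (Q' z)" .
  show ?thesis using form_bound[of x "adj A z"] by (simp add: e1 e2)
qed

definition M where "M = closure (range Q')"

lemma M_closed: "closed M" by (simp add: M_def)

lemma range_sub_M: "Q' w \<in> M" by (simp add: M_def closure_subset[THEN subsetD])

lemma M_scaleC: "m \<in> M \<Longrightarrow> scaleC c m \<in> M"
proof -
  assume m: "m \<in> M"
  have "scaleC c ` closure (range Q') \<subseteq> M"
  proof (rule image_closure_subset)
    show "continuous_on (closure (range Q')) (scaleC c)"
      by (rule linear_continuous_on[OF bounded_linear_scaleC])
    show "closed M" by (rule M_closed)
    show "scaleC c ` range Q' \<subseteq> M" using linD_scaleC[OF linQ'] range_sub_M by (auto simp flip: linD_scaleC[OF linQ'])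
  qed
  then show ?thesis using m by (auto simp: M_def)
qed

lemma M_add: "a \<in> M \<Longrightarrow> b \<in> M \<Longrightarrow> a + b \<in> M"
proof -
  have step1: "Q' w + b \<in> M" if b: "b \<in> M" for w b
  proof -
    have "(\<lambda>b. Q' w + b) ` closure (range Q') \<subseteq> M"
    proof (rule image_closure_subset)
      show "continuous_on (closure (range Q')) (\<lambda>b. Q' w + b)" by (intro continuous_intros)
      show "closed M" by (rule M_closed)
      show "(\<lambda>b. Q' w + b) ` range Q' \<subseteq> M" using linD_add[OF linQ'] range_sub_M by (auto simp flip: linD_add[OF linQ'])
    qed
    then show ?thesis using b by (auto simp: M_def)
  qed
  assume a: "a \<in> M" and b: "b \<in> M"
  have "(\<lambda>a. a + b) ` closure (range Q') \<subseteq> M"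
  proof (rule image_closure_subset)
    show "continuous_on (closure (range Q')) (\<lambda>a. a + b)" by (intro continuous_intros)
    show "closed M" by (rule M_closed)
    show "(\<lambda>a. a + b) ` range Q' \<subseteq> M" using step1[OF b] by auto
  qed
  then show ?thesis using a by (auto simp: M_def)
qed

lemma M_bound: "m \<in> M \<Longrightarrow> cmod (cinner (A (B x)) m) \<le> r * sqrt (qf Q x * qf Q' m)"
proof -
  assume "m \<in> M"
  then obtain zs where zs: "\<And>n. zs n \<in> range Q'" "zs \<longlonglongrightarrow> m"
    unfolding M_def closure_sequential by blast
  have cQ': "isCont Q' y" for y by (rule linear_continuous_at[OF bounded_clinear_bl[OF Q'bcl]])
  have l1: "(\<lambda>n. cmod (cinner (A (B x)) (zs n))) \<longlonglongrightarrow> cmod (cinner (A (B x)) m)"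
    by (intro tendsto_intros tendsto_cinner zs(2))
  have l2: "(\<lambda>n. r * sqrt (qf Q x * qf Q' (zs n))) \<longlonglongrightarrow> r * sqrt (qf Q x * qf Q' m)"
    unfolding qf_def by (intro tendsto_intros tendsto_cinner zs(2) isCont_tendsto_compose[OF cQ'])
  have le: "\<forall>n\<ge>0. cmod (cinner (A (B x)) (zs n)) \<le> r * sqrt (qf Q x * qf Q' (zs n))"
  proof (intro allI impI)
    fix n :: nat
    obtain z where "zs n = Q' z" using zs(1)[of n] by auto
    then show "cmod (cinner (A (B x)) (zs n)) \<le> r * sqrt (qf Q x * qf Q' (zs n))"
      using range_bound by simp
  qed
  show ?thesis by (rule LIMSEQ_le[OF l1 l2]) (use le in blast)
qed

lemma mixed: "cmod (cinner (A (B x)) y) \<le> r * sqrt (qf Q x * qf Q' y)"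
proof -
  define K where "K = {k. y - k \<in> M}"
  have zeroM: "0 \<in> M" using range_sub_M[of 0] lin_zero[OF linQ'] by simp
  have ne: "K \<noteq> {}" using zeroM by (auto simp: K_def intro!: exI[of _ y])
  have cl: "closed K"
  proof -
    have "closed ((\<lambda>k. y - k) -` M)"
      by (rule continuous_closed_vimage[OF M_closed]) (intro continuous_intros)
    then show ?thesis by (simp add: K_def vimage_def)
  qed
  have mid: "scaleR (1/2) (k1 + k2) \<in> K" if "k1 \<in> K" "k2 \<in> K" for k1 k2
  proof -
    have "(y - k1) + (y - k2) \<in> M" using that by (intro M_add) (auto simp: K_def)
    then have "scaleC (complex_of_real (1/2)) ((y - k1) + (y - k2)) \<in> M" by (rule M_scaleC)
    then have "scaleR (1/2) ((y - k1) + (y - k2)) \<in> M" by (simp only: scaleC_of_real)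
    moreover have "scaleR (1/2) ((y - k1) + (y - k2)) = y - scaleR (1/2) (k1 + k2)"
      by (metis add_diff_add scaleR_half_double scaleR_right_diff_distrib)
    ultimately show ?thesis by (simp add: K_def)
  qed
  obtain y0 where y0: "y0 \<in> K" "\<And>k. k \<in> K \<Longrightarrow> norm y0 \<le> norm k"
    using min_norm_exists[OF ne cl mid] by blast
  define m0 where "m0 = y - y0"
  have m0M: "m0 \<in> M" using y0(1) by (simp add: K_def m0_def)
  have orth: "cinner y0 (Q' w) = 0" for w
  proof (rule min_orth)
    fix t
    have "m0 + scaleC (- t) (Q' w) \<in> M" by (intro M_add m0M M_scaleC range_sub_M)
    then have "y0 + scaleC t (Q' w) \<in> K" by (simp add: K_def m0_def scaleC_minus_left algebra_simps)
    then show "norm y0 \<le> norm (y0 + scaleC t (Q' w))" by (rule y0(2))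
  qed
  have Q'y0: "Q' y0 = 0"
  proof -
    have "cinner (Q' y0) (Q' y0) = cinner y0 (Q' (Q' y0))" using Q'sa by (simp add: selfadj_def)
    also have "\<dots> = 0" by (rule orth)
    finally show ?thesis by simp
  qed
  have Ay0: "adj A y0 = 0"
  proof -
    have "norm (adj A y0) ^ 2 = Re (cinner (A (adj A y0)) y0)"
      by (simp add: adj_prop[OF A] flip: cinner_self_Re)
    also have "A (adj A y0) = Q' (Q' y0)" by (simp add: abs_op_adj_sq[OF A])
    finally show ?thesis by (simp add: Q'y0 lin_zero[OF linQ'])
  qed
  have y_split: "y = m0 + y0" by (simp add: m0_def)
  have e1: "cinner (A (B x)) y = cinner (A (B x)) m0"
    by (simp add: y_split cinner_add_right adj_prop[OF A] Ay0)
  have e2: "qf Q' y = qf Q' m0"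
  proof -
    have "cinner (Q' m0) y0 = cinner m0 (Q' y0)" using Q'sa by (simp add: selfadj_def)
    then show ?thesis
      by (simp add: qf_def y_split linD_add[OF linQ'] Q'y0 cinner_add_left cinner_add_right)
  qed
  show ?thesis using M_bound[OF m0M, of x] by (simp add: e1 e2)
qed

definition N where "N x = Q x + scaleC \<i> (Q' x)" for x

lemma N_bcl: "bounded_clinear N"
  unfolding N_def
  by (intro bounded_clinear_add bounded_clinear_scaleC Q'bcl) (use Qpos in \<open>simp add: pos_op_def\<close>)

lemma N_form: "cinner (N x) x = Complex (qf Q x) (qf Q' x)"
proof -
  have a: "cinner (Q x) x = complex_of_real (qf Q x)"
    using selfadj_real'[OF Qsa] by (simp add: qf_def)
  have b: "cinner (Q' x) x = complex_of_real (qf Q' x)"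
    using selfadj_real'[OF Q'sa] by (simp add: qf_def)
  show ?thesis by (simp add: N_def cinner_add_left cinner_scaleC_left a b complex_eq_iff)
qed

lemma pointwise: "cmod (cinner (A (B x)) x) \<le> 1 / sqrt 2 * r * cmod (cinner (N x) x)"
proof -
  define a where "a = qf Q x"
  define b where "b = qf Q' x"
  have a0: "0 \<le> a" "0 \<le> b" using qf_nonneg[OF Qpos] qf_nonneg[OF Q'pos] by (simp_all add: a_def b_def)
  have "cmod (cinner (A (B x)) x) \<le> r * sqrt (a * b)" using mixed[of x x] by (simp add: a_def b_def)
  also have "sqrt (a * b) \<le> sqrt ((a ^ 2 + b ^ 2) / 2)"
  proof (rule real_sqrt_le_mono)
    have "0 \<le> (a - b) ^ 2" by simp
    then show "a * b \<le> (a ^ 2 + b ^ 2) / 2" by (simp add: power2_eq_square algebra_simps)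
  qed
  then have "r * sqrt (a * b) \<le> r * sqrt ((a ^ 2 + b ^ 2) / 2)"
    by (intro mult_left_mono specrad_nonneg[OF B])
  also have "sqrt ((a ^ 2 + b ^ 2) / 2) = 1 / sqrt 2 * cmod (cinner (N x) x)"
    by (simp add: N_form a_def b_def cmod_def real_sqrt_divide)
  finally show ?thesis by (simp add: mult.assoc mult.left_commute)
qed

end

lemma numrad_bdd:
  assumes T: "bounded_clinear T"
  shows "bdd_above (insert 0 {cmod (cinner (T x) x) | x. norm x = 1})"
proof (rule bdd_aboveI[of _ "onorm T"])
  fix w assume "w \<in> insert 0 {cmod (cinner (T x) x) | x. norm x = 1}"
  then show "w \<le> onorm T"
  proof
    assume "w = 0" then show ?thesis using bounded_clinear_onorm_nonneg[OF T] by simp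
  next
    assume "w \<in> {cmod (cinner (T x) x) | x. norm x = 1}"
    then obtain x where x: "w = cmod (cinner (T x) x)" "norm x = 1" by blast
    have "w \<le> norm (T x) * norm x" using x cauchy_schwarz[of "T x" x] by simp
    also have "\<dots> \<le> onorm T" using x bounded_clinear_onorm[OF T, of x] by simp
    finally show ?thesis .
  qed
qed

lemma numrad_ge: "bounded_clinear T \<Longrightarrow> norm x = 1 \<Longrightarrow> cmod (cinner (T x) x) \<le> numrad T"
  unfolding numrad_def by (rule cSup_upper[OF _ numrad_bdd]) auto

lemma numrad_nonneg: "bounded_clinear T \<Longrightarrow> 0 \<le> numrad T"
  unfolding numrad_def by (rule cSup_upper[OF _ numrad_bdd]) auto

theorem mainTheorem7:
  fixes A B :: "'a::complex_hilbert_space \<Rightarrow> 'a"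
  assumes "bounded_clinear A" and "bounded_clinear B"
    and "abs_op A \<circ> B = adj B \<circ> abs_op A"
  shows "numrad (A \<circ> B) \<le>
    1 / sqrt 2 * specrad B * numrad (\<lambda>x. abs_op A x + scaleC \<i> (abs_op (adj A) x))"
proof -
  interpret main_ctx A B by unfold_locales (rule assms)+
  have Neq: "(\<lambda>x. abs_op A x + scaleC \<i> (abs_op (adj A) x)) = N" by (simp add: fun_eq_iff N_def)
  have bound0: "0 \<le> 1 / sqrt 2 * specrad B * numrad N"
    using specrad_nonneg[OF assms(2)] numrad_nonneg[OF N_bcl] by simp
  show ?thesis unfolding Neq numrad_def[of "A \<circ> B"]
  proof (rule cSup_least)
    show "insert 0 {cmod (cinner ((A \<circ> B) x) x) | x. norm x = 1} \<noteq> {}" by simp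
    fix w assume "w \<in> insert 0 {cmod (cinner ((A \<circ> B) x) x) | x. norm x = 1}"
    then show "w \<le> 1 / sqrt 2 * specrad B * numrad N"
    proof
      assume "w = 0" then show ?thesis using bound0 by simp
    next
      assume "w \<in> {cmod (cinner ((A \<circ> B) x) x) | x. norm x = 1}"
      then obtain x where x: "w = cmod (cinner (A (B x)) x)" "norm x = 1" by auto
      have "w \<le> 1 / sqrt 2 * specrad B * cmod (cinner (N x) x)" using pointwise[of x] x by simp
      also have "\<dots> \<le> 1 / sqrt 2 * specrad B * numrad N"
        by (intro mult_left_mono numrad_ge[OF N_bcl x(2)])
           (use specrad_nonneg[OF assms(2)] in simp)
      finally show ?thesis .
    qed
  qed
qed


end
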